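(* Let $N\ge2$ be even, $\chi$ a primitive Dirichlet character modulo $N$, and $\overline\gamma_\chi=\operatorname{Ind}_{\overline\Gamma_\theta\cap\overline\Gamma_0(N^2)}^{\overline\Gamma_0(N^2)}\overline\lambda_\chi^{-1}$. (1) If $N\equiv2\pmod4$, then $\overline\gamma_\chi$ is an irreducible representation of dimension $2$. (2) If $N\equiv0\pmod4$, then $\overline\gamma_\chi$ is a reducible representation of dimension $2$ whose two irreducible components are non-isomorphic.
   Context: Hilbert symbol $(x,y)_{\mathbb R}=-1$ if $x<0,y<0$, else $1$. For $g=\begin{pmatrix}a&b\\c&d\end{pmatrix}\in SL_2(\mathbb R)$, $x(g)=d$ if $c=0$ and $x(g)=c$ otherwise; $\bar c(g_1,g_2)=(x(g_1),x(g_2))_{\mathbb R}(-x(g_1)x(g_2),x(g_1g_2))_{\mathbb R}$; $\overline{SL}_2(\mathbb R)=SL_2(\mathbb R)\times\{\pm1\}$ with $(g_1,\epsilon_1)(g_2,\epsilon_2)=(g_1g_2,\bar c(g_1,g_2)\epsilon_1\epsilon_2)$; $\overline\Gamma$ = preimage of $\Gamma$. Kronecker symbol with $\left(\frac01\right)=1,\left(\frac0{-1}\right)=-1$; $\epsilon_d=1$ or $i$ as $d\equiv1$ or $3\pmod 4$. $\omega=\begin{pmatrix}0&-1\\1&0\end{pmatrix}$, $\Gamma(2)=\{g\equiv I\bmod 2\}$, $\Gamma_\theta=\{g\in SL_2(\mathbb Z):ac\equiv bd\equiv0\bmod2\}=\Gamma(2)\sqcup\Gamma(2)\omega$, $\Gamma_0(M)=\{M\mid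 c\}$. $\lambda(r)=\left(\frac{2c}{d}\right)\epsilon_d^{-1}$ for $r\in\Gamma(2)$; for $r=r_1\omega$, $r_1=\begin{pmatrix}a_1&b_1\\c_1&d_1\end{pmatrix}\in\Gamma(2)$, $\lambda(r)=\left(\frac{2c_1}{d_1}\right)\epsilon_{d_1}^{-1}e^{-i\pi/4}(-c_1,d_1)_{\mathbb R}$. $\overline\lambda_\chi((r,\epsilon))=\lambda(r)\chi(d)\epsilon$ is a character of $\overline\Gamma_\theta\cap\overline\Gamma_0(N^2)$, which has index $2$ in $\overline\Gamma_0(N^2)$. *)

theory Defs
  imports Complex_Main "HOL-Library.Function_Algebras" "HOL-Number_Theory.Number_Theory"
    "HOL-Algebra.Group"
begin

text \<open>A 2x2 integer matrix (a,b,c,d) stands for [[a,b],[c,d]].\<close>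
type_synonym mat2 = "int \<times> int \<times> int \<times> int"
type_synonym mp = "mat2 \<times> int"   (* (g, epsilon) with epsilon in {1,-1} *)

fun mmul :: "mat2 \<Rightarrow> mat2 \<Rightarrow> mat2" where
  "mmul (a,b,c,d) (a',b',c',d') = (a*a'+b*c', a*b'+b*d', c*a'+d*c', c*b'+d*d')"

fun mdet :: "mat2 \<Rightarrow> int" where "mdet (a,b,c,d) = a*d - b*c"

definition SL2Z :: "mat2 set" where "SL2Z = {g. mdet g = 1}"

definition hilb :: "real \<Rightarrow> real \<Rightarrow> int" where
  "hilb x y = (if x < 0 \<and> y < 0 then -1 else 1)"

fun xfun :: "mat2 \<Rightarrow> int" where
  "xfun (a,b,c,d) = (if c = 0 then d else c)"

definition cbar :: "mat2 \<Rightarrow> mat2 \<Rightarrow> int" where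
  "cbar g1 g2 = hilb (xfun g1) (xfun g2) * hilb (- (xfun g1 * xfun g2)) (xfun (mmul g1 g2))"

fun mp_mult :: "mp \<Rightarrow> mp \<Rightarrow> mp" where
  "mp_mult (g1,e1) (g2,e2) = (mmul g1 g2, cbar g1 g2 * e1 * e2)"

definition Gamma0 :: "int \<Rightarrow> mat2 set" where
  "Gamma0 M = {(a,b,c,d). mdet (a,b,c,d) = 1 \<and> M dvd c}"

definition Gamma2 :: "mat2 set" where
  "Gamma2 = {(a,b,c,d). mdet (a,b,c,d) = 1 \<and> [a = 1] (mod 2) \<and> [b = 0] (mod 2)
                         \<and> [c = 0] (mod 2) \<and> [d = 1] (mod 2)}"

definition Gamma_theta :: "mat2 set" where
  "Gamma_theta = {(a,b,c,d). mdet (a,b,c,d) = 1 \<and> 2 dvd a*c \<and> 2 dvd b*d}"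

definition omega :: mat2 where "omega = (0,-1,1,0)"
definition omega_inv :: mat2 where "omega_inv = (0,1,-1,0)"

text \<open>The preimage in the metaplectic group of a subgroup of SL2(Z), as a HOL-Algebra monoid.\<close>
definition mp_group :: "mat2 set \<Rightarrow> mp monoid" where
  "mp_group S = \<lparr>carrier = {(g,e). g \<in> S \<and> e \<in> {1,-1}}, mult = mp_mult, one = ((1,0,0,1),1)\<rparr>"

definition jacobi :: "int \<Rightarrow> int \<Rightarrow> int" where
  "jacobi m n = (\<Prod>p\<in>prime_factors n. Legendre m p ^ multiplicity p n)"

text \<open>Kronecker symbol (m/n) for odd n, with (m/-1) = sign of m and the convention
  (0/1) = 1, (0/-1) = -1.\<close>
definition kron :: "int \<Rightarrow> int \<Rightarrow> int" where
  "kron m n = (if n > 0 then jacobi m n else jacobi m (-n) * (if m > 0 then 1 else -1))"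

definition eps :: "int \<Rightarrow> complex" where
  "eps d = (if [d = 1] (mod 4) then 1 else \<i>)"

fun lam_G2 :: "mat2 \<Rightarrow> complex" where
  "lam_G2 (a,b,c,d) = of_int (kron (2*c) d) * inverse (eps d)"

fun lam_G2w :: "mat2 \<Rightarrow> complex" where
  "lam_G2w (a1,b1,c1,d1) = of_int (kron (2*c1) d1) * inverse (eps d1)
       * exp (- \<i> * of_real pi / 4) * of_int (hilb (- c1) d1)"

text \<open>lambda on Gamma_theta = Gamma(2) \<union> Gamma(2) omega; in the second case r = r1 omega
  with r1 = r omega^{-1}.\<close>
definition lam :: "mat2 \<Rightarrow> complex" where
  "lam r = (if r \<in> Gamma2 then lam_G2 r else lam_G2w (mmul r omega_inv))"

fun dcoef :: "mat2 \<Rightarrow> int" where "dcoef (a,b,c,d) = d"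

definition lam_bar :: "(int \<Rightarrow> complex) \<Rightarrow> mp \<Rightarrow> complex" where
  "lam_bar \<chi> h = lam (fst h) * \<chi> (dcoef (fst h)) * of_int (snd h)"

definition dirichlet_char :: "int \<Rightarrow> (int \<Rightarrow> complex) \<Rightarrow> bool" where
  "dirichlet_char N \<chi> \<longleftrightarrow> N \<ge> 1 \<and> \<chi> 1 = 1 \<and> (\<forall>m n. \<chi> (m*n) = \<chi> m * \<chi> n)
     \<and> (\<forall>n. \<chi> (n + N) = \<chi> n) \<and> (\<forall>n. \<chi> n = 0 \<longleftrightarrow> \<not> coprime n N)"

definition primitive_dirichlet_char :: "int \<Rightarrow> (int \<Rightarrow> complex) \<Rightarrow> bool" where
  "primitive_dirichlet_char N \<chi> \<longleftrightarrow> dirichlet_char N \<chi> \<and>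
     (\<forall>M. M > 0 \<and> M dvd N \<and> M < N \<longrightarrow>
        (\<exists>n. coprime n N \<and> [n = 1] (mod M) \<and> \<chi> n \<noteq> 1))"

definition fsc :: "complex \<Rightarrow> ('g \<Rightarrow> complex) \<Rightarrow> ('g \<Rightarrow> complex)" where
  "fsc c f = (\<lambda>x. c * f x)"

text \<open>Model of Ind_H^G psi: functions f on G with f(hx) = psi(h) f(x), G acting by right translation.\<close>
definition ind_space :: "('g,'m) monoid_scheme \<Rightarrow> 'g set \<Rightarrow> ('g \<Rightarrow> complex) \<Rightarrow> ('g \<Rightarrow> complex) set" where
  "ind_space G H \<psi> = {f. (\<forall>x. x \<notin> carrier G \<longrightarrow> f x = 0) \<and>
       (\<forall>h\<in>H. \<forall>x\<in>carrier G. f (h \<otimes>\<^bsub>G\<^esub> x) = \<psi> h * f x)}"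

definition ind_act :: "('g,'m) monoid_scheme \<Rightarrow> 'g \<Rightarrow> ('g \<Rightarrow> complex) \<Rightarrow> ('g \<Rightarrow> complex)" where
  "ind_act G g f = (\<lambda>x. if x \<in> carrier G then f (x \<otimes>\<^bsub>G\<^esub> g) else 0)"

definition complex_rep :: "('g,'m) monoid_scheme \<Rightarrow> ('g \<Rightarrow> ('b \<Rightarrow> complex) \<Rightarrow> ('b \<Rightarrow> complex)) \<Rightarrow> ('b \<Rightarrow> complex) set \<Rightarrow> bool"
  where "complex_rep G \<rho> V \<longleftrightarrow> module.subspace fsc V \<and>
     (\<forall>g\<in>carrier G. \<forall>v\<in>V. \<rho> g v \<in> V) \<and>
     (\<forall>g\<in>carrier G. \<forall>v\<in>V. \<forall>w\<in>V. \<rho> g (v + w) = \<rho> g v + \<rho> g w) \<and>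
     (\<forall>g\<in>carrier G. \<forall>c. \<forall>v\<in>V. \<rho> g (fsc c v) = fsc c (\<rho> g v)) \<and>
     (\<forall>v\<in>V. \<rho> \<one>\<^bsub>G\<^esub> v = v) \<and>
     (\<forall>g\<in>carrier G. \<forall>h\<in>carrier G. \<forall>v\<in>V. \<rho> (g \<otimes>\<^bsub>G\<^esub> h) v = \<rho> g (\<rho> h v))"

definition invariant_subspace :: "('g,'m) monoid_scheme \<Rightarrow> ('g \<Rightarrow> ('b \<Rightarrow> complex) \<Rightarrow> ('b \<Rightarrow> complex)) \<Rightarrow> ('b \<Rightarrow> complex) set \<Rightarrow> ('b \<Rightarrow> complex) set \<Rightarrow> bool"
  where "invariant_subspace G \<rho> V W \<longleftrightarrow> W \<subseteq> V \<and> module.subspace fsc W \<and>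
     (\<forall>g\<in>carrier G. \<forall>w\<in>W. \<rho> g w \<in> W)"

definition irreducible_rep :: "('g,'m) monoid_scheme \<Rightarrow> ('g \<Rightarrow> ('b \<Rightarrow> complex) \<Rightarrow> ('b \<Rightarrow> complex)) \<Rightarrow> ('b \<Rightarrow> complex) set \<Rightarrow> bool"
  where "irreducible_rep G \<rho> V \<longleftrightarrow> V \<noteq> {0} \<and>
     (\<forall>W. invariant_subspace G \<rho> V W \<longrightarrow> W = {0} \<or> W = V)"

definition rep_iso :: "('g,'m) monoid_scheme \<Rightarrow> ('g \<Rightarrow> ('b \<Rightarrow> complex) \<Rightarrow> ('b \<Rightarrow> complex)) \<Rightarrow> ('b \<Rightarrow> complex) set \<Rightarrow> ('b \<Rightarrow> complex) set \<Rightarrow> bool"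
  where "rep_iso G \<rho> W1 W2 \<longleftrightarrow> (\<exists>T. bij_betw T W1 W2 \<and>
     (\<forall>v\<in>W1. \<forall>w\<in>W1. T (v + w) = T v + T w) \<and>
     (\<forall>c. \<forall>v\<in>W1. T (fsc c v) = fsc c (T v)) \<and>
     (\<forall>g\<in>carrier G. \<forall>v\<in>W1. T (\<rho> g v) = \<rho> g (T v)))"

definition rep_dim :: "('b \<Rightarrow> complex) set \<Rightarrow> nat" where
  "rep_dim V = vector_space.dim fsc V"

end

theory Submission
  imports Defs
begin

definition chi4 :: "int \<Rightarrow> int" where "chi4 n = (if n mod 4 = 1 then 1 else -1)"
definition e4 :: "int \<Rightarrow> int \<Rightarrow> int" where "e4 m n = (if m mod 4 = 3 \<and> n mod 4 = 3 then -1 else 1)"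
definition q8 :: "int \<Rightarrow> int" where "q8 n = (if n mod 8 = 1 \<or> n mod 8 = 7 then 1 else -1)"

lemma small_cong_eq:
  fixes x y p :: int
  assumes "x \<in> {-1,0,1}" "y \<in> {-1,0,1}" "p > 2" "[x = y] (mod p)"
  shows "x = y"
proof (rule ccontr)
  assume ne: "x \<noteq> y"
  have "p dvd (x - y)" using assms(4) by (simp add: cong_iff_dvd_diff)
  then have "\<bar>p\<bar> \<le> \<bar>x - y\<bar>" using ne by (intro dvd_imp_le_int) auto
  moreover have "\<bar>x - y\<bar> \<le> 2" using assms(1,2) by auto
  ultimately show False using assms(3) by simp
qed

lemma Legendre_vals: "Legendre a p \<in> {-1,0,1}"
  by (simp add: Legendre_def)

lemma Legendre_cong:
  assumes "[a = b] (mod p)" shows "Legendre a p = Legendre b p"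
proof -
  have 1: "[a = 0] (mod p) \<longleftrightarrow> [b = 0] (mod p)" using assms cong_sym cong_trans by metis
  have "[y^2 = a] (mod p) \<longleftrightarrow> [y^2 = b] (mod p)" for y using assms cong_sym cong_trans by metis
  then have "QuadRes p a \<longleftrightarrow> QuadRes p b" unfolding QuadRes_def by simp
  with 1 show ?thesis by (simp add: Legendre_def)
qed

lemma euler_int:
  fixes p :: int
  assumes "prime p" "p > 2"
  shows "[Legendre a p = a ^ nat ((p - 1) div 2)] (mod p)"
proof -
  have e: "int (nat p) = p" using assms by simp
  have pn: "prime (nat p)" using assms(1) e prime_nat_int_transfer by metis
  have pn2: "2 < nat p" using assms by simp
  have "(nat p - 1) div 2 = nat ((p - 1) div 2)" using assms by (simp add: nat_div_distrib nat_diff_distrib)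
  then show ?thesis using euler_criterion[OF pn pn2, of a] e by simp
qed


lemma Legendre_mult:
  fixes p :: int
  assumes "prime p" "p > 2"
  shows "Legendre (a * b) p = Legendre a p * Legendre b p"
proof -
  have "[Legendre (a*b) p = (a*b) ^ nat ((p - 1) div 2)] (mod p)" by (rule euler_int[OF assms])
  moreover have "[Legendre a p * Legendre b p = a ^ nat ((p - 1) div 2) * b ^ nat ((p - 1) div 2)] (mod p)"
    by (intro cong_mult euler_int assms)
  ultimately have "[Legendre (a*b) p = Legendre a p * Legendre b p] (mod p)"
    by (metis cong_sym cong_trans power_mult_distrib)
  moreover have "Legendre a p * Legendre b p \<in> {-1,0,1}" using Legendre_vals[of a p] Legendre_vals[of b p] by auto
  ultimately show ?thesis using small_cong_eq Legendre_vals assms(2) by blast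
qed

lemma half_even: "odd (p::int) \<Longrightarrow> even ((p - 1) div 2) \<longleftrightarrow> p mod 4 = 1"
  by presburger

lemma half_even_nat: "(p::int) > 0 \<Longrightarrow> odd p \<Longrightarrow> even (nat ((p - 1) div 2)) \<longleftrightarrow> p mod 4 = 1"
proof -
  assume "p > 0" "odd p"
  then have "(p - 1) div 2 \<ge> 0" by simp
  then have "even (nat ((p - 1) div 2)) \<longleftrightarrow> even ((p - 1) div 2)" by (rule even_nat_iff)
  then show ?thesis using half_even[OF \<open>odd p\<close>] by simp
qed

lemma Legendre_minus1:
  fixes p :: int
  assumes "prime p" "p > 2"
  shows "Legendre (-1) p = chi4 p"
proof -
  have c: "[Legendre (-1) p = (-1) ^ nat ((p - 1) div 2)] (mod p)" by (rule euler_int[OF assms])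
  have "odd p" using assms prime_odd_int by blast
  have E: "even (nat ((p - 1) div 2)) \<longleftrightarrow> p mod 4 = 1"
    using half_even_nat[of p] assms(2) \<open>odd p\<close> by simp
  have "(-1::int) ^ nat ((p - 1) div 2) = chi4 p"
  proof (cases "p mod 4 = 1")
    case True
    then have "even (nat ((p - 1) div 2))" using E by blast
    then show ?thesis using True by (simp add: chi4_def neg_one_even_power)
  next
    case False
    then have "odd (nat ((p - 1) div 2))" using E by blast
    then show ?thesis using False by (simp add: chi4_def neg_one_odd_power)
  qed
  then have c2: "[Legendre (-1) p = chi4 p] (mod p)" using c by simp
  have "chi4 p \<in> {-1,0,1}" by (simp add: chi4_def)
  then show ?thesis using small_cong_eq[OF Legendre_vals _ assms(2) c2] by simp
qed

lemma Legendre_unit: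
  fixes p :: int
  assumes "prime p" "\<not> p dvd a"
  shows "Legendre a p \<in> {-1,1}"
  using assms by (auto simp: Legendre_def cong_0_iff)

lemma Legendre_QR:
  fixes p q :: int
  assumes "prime p" "p > 2" "prime q" "q > 2" "p \<noteq> q"
  shows "Legendre p q * Legendre q p = e4 p q"
proof -
  have L: "Legendre p q * Legendre q p = (- 1) ^ nat ((p - 1) div 2 * ((q - 1) div 2))"
  proof -
    have "prime (nat p)" using assms(1,2) prime_nat_int_transfer[of "nat p"] by simp
    moreover have "prime (nat q)" using assms(3,4) prime_nat_int_transfer[of "nat q"] by simp
    ultimately show ?thesis using Quadratic_Reciprocity_int[of p q] assms(2,4,5) by blast
  qed
  have "odd p" "odd q" using assms prime_odd_int by blast+
  have "even (nat ((p - 1) div 2 * ((q - 1) div 2))) \<longleftrightarrow> even ((p - 1) div 2 * ((q - 1) div 2))"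
    using assms by (simp add: even_nat_iff)
  also have "\<dots> \<longleftrightarrow> even ((p - 1) div 2) \<or> even ((q - 1) div 2)" by simp
  also have "\<dots> \<longleftrightarrow> p mod 4 = 1 \<or> q mod 4 = 1" using half_even[OF \<open>odd p\<close>] half_even[OF \<open>odd q\<close>] by simp
  finally have E: "even (nat ((p - 1) div 2 * ((q - 1) div 2))) \<longleftrightarrow> p mod 4 = 1 \<or> q mod 4 = 1" .
  have m: "p mod 4 = 1 \<or> p mod 4 = 3" "q mod 4 = 1 \<or> q mod 4 = 3" using \<open>odd p\<close> \<open>odd q\<close> by presburger+
  show ?thesis
  proof (cases "p mod 4 = 3 \<and> q mod 4 = 3")
    case True
    then have "odd (nat ((p - 1) div 2 * ((q - 1) div 2)))" using E by auto
    then show ?thesis using True L by (simp add: e4_def neg_one_odd_power)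
  next
    case False then have "p mod 4 = 1 \<or> q mod 4 = 1" using m by auto
    then have "even (nat ((p - 1) div 2 * ((q - 1) div 2)))" using E by blast
    then show ?thesis using False L by (simp add: e4_def neg_one_even_power)
  qed
qed


lemma jacobi_mset: "jacobi m n = prod_mset (image_mset (\<lambda>p. Legendre m p) (prime_factorization n))"
  unfolding jacobi_def image_prod_mset_multiplicity
  by (intro prod.cong refl) (simp add: count_prime_factorization_prime in_prime_factors_iff)

lemma jacobi_1 [simp]: "jacobi m 1 = 1"
  by (simp add: jacobi_mset)

lemma jacobi_mult_den:
  "n1 \<noteq> 0 \<Longrightarrow> n2 \<noteq> 0 \<Longrightarrow> jacobi m (n1 * n2) = jacobi m n1 * jacobi m n2"
  by (simp add: jacobi_mset prime_factorization_mult)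

lemma jacobi_prime: "prime p \<Longrightarrow> jacobi m p = Legendre m p"
  by (simp add: jacobi_mset prime_factorization_prime)

lemma pf_uminus: "prime_factorization (- (n::int)) = prime_factorization n"
  using prime_factorization_normalize[of "-n"] prime_factorization_normalize[of n] by simp

lemma jacobi_uminus_den: "jacobi m (- n) = jacobi m n"
  by (simp add: jacobi_mset pf_uminus)

lemma pos_odd_induct [consumes 2, case_names one step]:
  fixes n :: int
  assumes "n > 0" "odd n" "P 1"
    and "\<And>p x. prime p \<Longrightarrow> p > 2 \<Longrightarrow> x > 0 \<Longrightarrow> odd x \<Longrightarrow> P x \<Longrightarrow> P (p * x)"
  shows "P n"
proof -
  have "n > 0 \<longrightarrow> odd n \<longrightarrow> P n"
  proof (induction n rule: prime_divisors_induct)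
    case (unit x)
    show ?case
    proof (intro impI)
      assume "x > 0"
      have "\<bar>x\<bar> = 1" using unit zdvd1_eq by blast
      then have "x = 1" using \<open>x > 0\<close> by simp
      then show "P x" using assms(3) by simp
    qed
  next
    case (factor p x)
    show ?case
    proof (intro impI)
      assume h: "p * x > 0" "odd (p * x)"
      have "p > 0" using factor(1) prime_gt_0_int by blast
      then have "x > 0" using h(1) by (simp add: zero_less_mult_iff)
      have "odd p" "odd x" using h(2) by auto
      have "p \<ge> 2" using factor(1) prime_ge_2_int by blast
      then have "p > 2" using \<open>odd p\<close> by (cases "p = 2") auto
      then show "P (p * x)" using assms(4) factor(1,2) \<open>x > 0\<close> \<open>odd x\<close> by blast
    qed
  qed simp
  then show ?thesis using assms by blast
qed

lemma odd_prime_factor: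
  fixes n :: int
  assumes "odd n" "p \<in># prime_factorization n"
  shows "prime p" "p > 2" "p dvd n"
proof -
  show "prime p" "p dvd n" using assms(2) in_prime_factors_iff by blast+
  then have "odd p" using assms(1) dvd_trans by blast
  have "p \<ge> 2" using \<open>prime p\<close> prime_ge_2_int by blast
  then show "p > 2" using \<open>odd p\<close> by (cases "p = 2") auto
qed

lemma jacobi_mult_num:
  assumes "odd n"
  shows "jacobi (a * b) n = jacobi a n * jacobi b n"
proof -
  have "image_mset (\<lambda>p. Legendre (a*b) p) (prime_factorization n) =
        image_mset (\<lambda>p. Legendre a p * Legendre b p) (prime_factorization n)"
  proof (rule image_mset_cong)
    fix p assume "p \<in># prime_factorization n"
    then show "Legendre (a*b) p = Legendre a p * Legendre b p"
      using Legendre_mult odd_prime_factor[OF assms] by blast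
  qed
  then show ?thesis by (simp add: jacobi_mset prod_mset.distrib)
qed

lemma jacobi_cong:
  assumes "[a = b] (mod n)"
  shows "jacobi a n = jacobi b n"
proof -
  have "image_mset (\<lambda>p. Legendre a p) (prime_factorization n) =
        image_mset (\<lambda>p. Legendre b p) (prime_factorization n)"
  proof (rule image_mset_cong)
    fix p assume "p \<in># prime_factorization n"
    then have "p dvd n" by (rule in_prime_factors_imp_dvd)
    then have "[a = b] (mod p)" using assms cong_dvd_modulus by blast
    then show "Legendre a p = Legendre b p" by (rule Legendre_cong)
  qed
  then show ?thesis by (simp add: jacobi_mset)
qed

lemma mod4_cases: "odd (m::int) \<Longrightarrow> m mod 4 = 1 \<or> m mod 4 = 3" by presburger

lemma mod4_mult: "((m::int) * n) mod 4 = ((m mod 4) * (n mod 4)) mod 4" by (simp add: mod_mult_eq)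

lemma chi4_mult: "odd m \<Longrightarrow> odd n \<Longrightarrow> chi4 (m * n) = chi4 m * chi4 n"
  using mod4_cases[of m] mod4_cases[of n] mod4_mult[of m n] unfolding chi4_def by auto

lemma e4_mult2: "odd m \<Longrightarrow> odd n \<Longrightarrow> e4 k (m * n) = e4 k m * e4 k n"
  using mod4_cases[of m] mod4_cases[of n] mod4_mult[of m n] unfolding e4_def by auto

lemma e4_comm: "e4 m n = e4 n m" by (auto simp: e4_def)

lemma e4_mult1: "odd m \<Longrightarrow> odd n \<Longrightarrow> e4 (m * n) k = e4 m k * e4 n k"
  using e4_mult2[of m n k] by (simp add: e4_comm)

lemma jacobi_minus1:
  assumes "n > 0" "odd n" shows "jacobi (-1) n = chi4 n"
  using assms
proof (induction n rule: pos_odd_induct)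
  case one then show ?case by (simp add: chi4_def)
next
  case (step p x)
  have "jacobi (-1) (p * x) = jacobi (-1) p * jacobi (-1) x"
    using step by (intro jacobi_mult_den) auto
  also have "\<dots> = chi4 p * chi4 x" using step jacobi_prime Legendre_minus1 by simp
  also have "\<dots> = chi4 (p * x)" using step prime_odd_int[of p] chi4_mult[of p x] by simp
  finally show ?case .
qed

lemma jacobi_sq:
  assumes "n > 0" "odd n" "coprime a n" shows "jacobi a n * jacobi a n = 1"
proof -
  have "coprime a n \<longrightarrow> jacobi a n * jacobi a n = 1"
    using assms(1,2)
  proof (induction n rule: pos_odd_induct)
    case one then show ?case by simp
  next
    case (step p x)
    show ?case
    proof
      assume c: "coprime a (p * x)"
      have cx: "coprime a x" using c by simp
      have cp: "coprime a p" using c by simp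
      have "\<not> p dvd a"
      proof
        assume "p dvd a"
        then have "p dvd 1" using cp coprime_common_divisor[of a p p] by simp
        then show False using step(1) by (simp add: prime_int_iff)
      qed
      then have L: "Legendre a p \<in> {-1,1}" using Legendre_unit step(1) by blast
      have "jacobi a (p * x) = Legendre a p * jacobi a x"
        using step jacobi_mult_den[of p x a] jacobi_prime[of p a] by simp
      moreover have "jacobi a x * jacobi a x = 1" using step(5) cx by blast
      ultimately show "jacobi a (p * x) * jacobi a (p * x) = 1" using L
        by (auto simp: algebra_simps)
    qed
  qed
  then show ?thesis using assms(3) by blast
qed


lemma Legendre_1: "prime (p::int) \<Longrightarrow> Legendre 1 p = 1"
proof -
  assume "prime p"
  then have "p > 1" using prime_gt_1_int by blast
  then have "\<not> [1 = 0] (mod p)" by (simp add: cong_0_iff)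
  moreover have "QuadRes p 1" unfolding QuadRes_def by (rule exI[of _ 1]) simp
  ultimately show ?thesis by (simp add: Legendre_def)
qed

lemma jacobi_1_num [simp]: "jacobi 1 n = 1"
proof -
  have "image_mset (\<lambda>p. Legendre 1 p) (prime_factorization n) = image_mset (\<lambda>p. 1) (prime_factorization n)"
    by (rule image_mset_cong) (simp add: Legendre_1 in_prime_factors_iff)
  then show ?thesis by (simp add: jacobi_mset)
qed

lemma jacobi_recip_prime:
  assumes "prime p" "p > 2" "n > 0" "odd n" "coprime p n"
  shows "jacobi p n * jacobi n p = e4 p n"
proof -
  have "coprime p n \<longrightarrow> jacobi p n * jacobi n p = e4 p n"
    using assms(3,4)
  proof (induction n rule: pos_odd_induct)
    case one then show ?case using assms(1) by (simp add: jacobi_prime Legendre_1 e4_def)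
  next
    case (step q x)
    show ?case
    proof
      assume c: "coprime p (q * x)"
      have cx: "coprime p x" using c by simp
      have "p \<noteq> q"
      proof
        assume "p = q"
        then have "p dvd 1" using c coprime_common_divisor[of p "q*x" p] by simp
        then show False using assms(1) by (simp add: prime_int_iff)
      qed
      have oddp: "odd p" using assms(1,2) prime_odd_int by blast
      have 1: "jacobi p (q * x) = Legendre p q * jacobi p x"
        using step jacobi_mult_den[of q x p] jacobi_prime[of q p] by simp
      have 2: "jacobi (q * x) p = Legendre q p * jacobi x p"
        using jacobi_mult_num[OF oddp, of q x] jacobi_prime[OF assms(1)] by simp
      have 3: "Legendre p q * Legendre q p = e4 p q"
        using Legendre_QR assms(1,2) step(1,2) \<open>p \<noteq> q\<close> by blast
      have 4: "jacobi p x * jacobi x p = e4 p x" using step(5) cx by blast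
      have "jacobi p (q * x) * jacobi (q * x) p = (Legendre p q * Legendre q p) * (jacobi p x * jacobi x p)"
        unfolding 1 2 by (simp add: algebra_simps)
      also have "\<dots> = e4 p q * e4 p x" using 3 4 by simp
      also have "\<dots> = e4 p (q * x)" using e4_mult2[of q x p] step(1,2,4) prime_odd_int by simp
      finally show "jacobi p (q * x) * jacobi (q * x) p = e4 p (q * x)" .
    qed
  qed
  then show ?thesis using assms(5) by blast
qed

lemma jacobi_recip:
  assumes "m > 0" "odd m" "n > 0" "odd n" "coprime m n"
  shows "jacobi m n * jacobi n m = e4 m n"
proof -
  have "coprime m n \<longrightarrow> jacobi m n * jacobi n m = e4 m n"
    using assms(1,2)
  proof (induction m rule: pos_odd_induct)
    case one then show ?case by (simp add: e4_def)
  next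
    case (step p x)
    show ?case
    proof
      assume c: "coprime (p * x) n"
      have cx: "coprime x n" and cp: "coprime p n" using c by simp_all
      have 1: "jacobi (p * x) n = jacobi p n * jacobi x n" using jacobi_mult_num assms(4) by blast
      have 2: "jacobi n (p * x) = jacobi n p * jacobi n x" using jacobi_mult_den step(1,3)
        by (metis not_prime_0 less_irrefl)
      have 3: "jacobi p n * jacobi n p = e4 p n" using jacobi_recip_prime step(1,2) assms(3,4) cp by blast
      have 4: "jacobi x n * jacobi n x = e4 x n" using step(5) cx by blast
      have "jacobi (p * x) n * jacobi n (p * x) = (jacobi p n * jacobi n p) * (jacobi x n * jacobi n x)"
        unfolding 1 2 by (simp add: algebra_simps)
      also have "\<dots> = e4 (p * x) n" unfolding 3 4 using e4_mult1[of p x n] step(1,2,4) prime_odd_int by simp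
      finally show "jacobi (p * x) n * jacobi n (p * x) = e4 (p * x) n" .
    qed
  qed
  then show ?thesis using assms(5) by blast
qed

lemma coprime_plus2: "odd (m::int) \<Longrightarrow> coprime m (m + 2)"
proof (rule coprimeI)
  fix d assume m: "odd m" and d: "d dvd m" "d dvd m + 2"
  obtain k where k: "m = 2 * k + 1" using m by (metis oddE)
  have "d dvd (k + 1) * m - k * (m + 2)" using d by (simp add: dvd_diff)
  moreover have "(k + 1) * m - k * (m + 2) = 1" using k by (simp add: algebra_simps)
  ultimately show "is_unit d" by simp
qed

lemma q8_step: "odd (n::int) \<Longrightarrow> chi4 n * e4 (n - 2) n * q8 (n - 2) = q8 n"
proof -
  assume "odd n"
  then have "n mod 8 = 1 \<or> n mod 8 = 3 \<or> n mod 8 = 5 \<or> n mod 8 = 7" by presburger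
  then consider "n mod 8 = 1" | "n mod 8 = 3" | "n mod 8 = 5" | "n mod 8 = 7" by blast
  then show ?thesis
  proof cases
    case 1
    then have "(n - 2) mod 8 = 7" "n mod 4 = 1" "(n - 2) mod 4 = 3" by presburger+
    then show ?thesis using 1 by (simp add: chi4_def e4_def q8_def)
  next
    case 2
    then have "(n - 2) mod 8 = 1" "n mod 4 = 3" "(n - 2) mod 4 = 1" by presburger+
    then show ?thesis using 2 by (simp add: chi4_def e4_def q8_def)
  next
    case 3
    then have "(n - 2) mod 8 = 3" "n mod 4 = 1" "(n - 2) mod 4 = 3" by presburger+
    then show ?thesis using 3 by (simp add: chi4_def e4_def q8_def)
  next
    case 4
    then have "(n - 2) mod 8 = 5" "n mod 4 = 3" "(n - 2) mod 4 = 1" by presburger+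
    then show ?thesis using 4 by (simp add: chi4_def e4_def q8_def)
  qed
qed

lemma q8_sq: "q8 n * q8 n = 1" by (simp add: q8_def)

lemma jacobi_two_aux: "\<forall>n. n > 0 \<longrightarrow> odd n \<longrightarrow> nat n = k \<longrightarrow> jacobi 2 n = q8 n"
proof (induction k rule: less_induct)
  case (less k)
  show ?case
  proof (intro allI impI)
    fix n :: int
    assume n: "n > 0" "odd n" "nat n = k"
    show "jacobi 2 n = q8 n"
    proof (cases "n = 1")
      case True then show ?thesis by (simp add: q8_def)
    next
      case False
      define m where "m = n - 2"
      have m: "m > 0" "odd m" using n False unfolding m_def by presburger+
      have nm: "n = m + 2" unfolding m_def by simp
      have cop: "coprime m n" using coprime_plus2[OF m(2)] nm by simp
      have "[2 = -1 * m] (mod n)" unfolding nm by (simp add: cong_iff_dvd_diff add.commute)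
      then have "jacobi 2 n = jacobi (-1 * m) n" by (rule jacobi_cong)
      also have "\<dots> = chi4 n * jacobi m n" using jacobi_mult_num[OF n(2), of "-1" m] jacobi_minus1[OF n(1,2)] by presburger
      finally have A: "jacobi 2 n = chi4 n * jacobi m n" .
      have "[n = 2] (mod m)" unfolding nm by (simp add: cong_iff_dvd_diff)
      then have "jacobi n m = jacobi 2 m" by (rule jacobi_cong)
      also have "\<dots> = q8 m" using less.IH[of "nat m"] m n nm by simp
      finally have B: "jacobi n m = q8 m" .
      have C: "jacobi m n * jacobi n m = e4 m n" using jacobi_recip[OF m n(1,2) cop] .
      have "jacobi m n = e4 m n * q8 m"
      proof -
        have "jacobi m n = jacobi m n * (q8 m * q8 m)" by (simp add: q8_sq)
        also have "\<dots> = e4 m n * q8 m" using C B by (simp add: algebra_simps)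
        finally show ?thesis .
      qed
      then have "jacobi 2 n = chi4 n * e4 (n - 2) n * q8 (n - 2)" using A unfolding m_def by simp
      then show ?thesis using q8_step[OF n(2)] by simp
    qed
  qed
qed

lemma jacobi_two: "n > 0 \<Longrightarrow> odd n \<Longrightarrow> jacobi 2 n = q8 n"
  using jacobi_two_aux by blast


definition sf :: "int \<Rightarrow> int \<Rightarrow> int" where "sf m n = (if n < 0 \<and> m \<le> 0 then -1 else 1)"

lemma kron_alt: "n \<noteq> 0 \<Longrightarrow> kron m n = jacobi m \<bar>n\<bar> * sf m n"
proof (cases "n > 0")
  case True then show ?thesis by (simp add: kron_def sf_def)
next
  case False
  assume "n \<noteq> 0"
  with False have "n < 0" by simp
  then have "\<bar>n\<bar> = - n" by simp
  then show ?thesis using \<open>n < 0\<close> unfolding kron_def sf_def by simp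
qed

lemma q8_neg: "q8 (-n) = q8 n"
proof -
  have "((-n) mod 8 = 1 \<or> (-n) mod 8 = 7) \<longleftrightarrow> (n mod 8 = 1 \<or> n mod 8 = 7)" by presburger
  then show ?thesis by (simp add: q8_def)
qed

lemma q8_abs: "q8 \<bar>n\<bar> = q8 n"
  by (cases "n < 0") (auto simp: q8_neg)

lemma cong_mod_eq: "[(m::int) = n] (mod k) \<Longrightarrow> m mod k = n mod k"
  by (simp add: cong_iff_dvd_diff mod_eq_dvd_iff)

lemma q8_cong: "[m = n] (mod 8) \<Longrightarrow> q8 m = q8 n"
  using cong_mod_eq[of m n 8] by (simp add: q8_def)

lemma q8_mult: "odd m \<Longrightarrow> odd n \<Longrightarrow> q8 (m * n) = q8 m * q8 n"
proof -
  assume "odd m" "odd n"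
  then have a: "m mod 8 = 1 \<or> m mod 8 = 3 \<or> m mod 8 = 5 \<or> m mod 8 = 7"
    "n mod 8 = 1 \<or> n mod 8 = 3 \<or> n mod 8 = 5 \<or> n mod 8 = 7" by presburger+
  have b: "(m * n) mod 8 = ((m mod 8) * (n mod 8)) mod 8" by (simp add: mod_mult_eq)
  show ?thesis using a unfolding q8_def b by auto
qed

lemma jacobi_two_abs: "odd n \<Longrightarrow> jacobi 2 \<bar>n\<bar> = q8 n"
proof -
  assume "odd n"
  then have "\<bar>n\<bar> > 0" "odd \<bar>n\<bar>" by auto
  then show ?thesis using jacobi_two q8_abs by metis
qed

lemma kron_2c: "odd d \<Longrightarrow> kron (2 * c) d = q8 d * kron c d"
proof -
  assume d: "odd d"
  then have "d \<noteq> 0" by auto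
  have "odd \<bar>d\<bar>" using d by simp
  have "kron (2 * c) d = jacobi (2 * c) \<bar>d\<bar> * sf (2 * c) d" using kron_alt \<open>d \<noteq> 0\<close> by blast
  also have "\<dots> = jacobi 2 \<bar>d\<bar> * jacobi c \<bar>d\<bar> * sf c d"
    using jacobi_mult_num[OF \<open>odd \<bar>d\<bar>\<close>, of 2 c] by (simp add: sf_def)
  also have "\<dots> = q8 d * kron c d" using jacobi_two_abs[OF d] kron_alt[OF \<open>d \<noteq> 0\<close>, of c] by simp
  finally show ?thesis .
qed

lemma chi4_neg: "odd n \<Longrightarrow> chi4 (-n) = - chi4 n"
proof -
  assume "odd n"
  then have "(-n) mod 4 = 1 \<longleftrightarrow> n mod 4 \<noteq> 1" by presburger
  then show ?thesis by (auto simp: chi4_def)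
qed

lemma e4_neg: "odd u \<Longrightarrow> odd n \<Longrightarrow> e4 u (-n) * chi4 u = e4 u n"
proof -
  assume "odd u" "odd n"
  then have "u mod 4 = 1 \<or> u mod 4 = 3" "(-n) mod 4 = 3 \<longleftrightarrow> n mod 4 = 1" "n mod 4 = 1 \<or> n mod 4 = 3" by presburger+
  then show ?thesis by (auto simp: chi4_def e4_def)
qed

lemma KPform:
  assumes "odd v" "odd k" "coprime v k"
  shows "jacobi v \<bar>k\<bar> * sf v k = jacobi k \<bar>v\<bar> * ((if v < 0 then chi4 k else 1) * e4 \<bar>v\<bar> k)"
proof -
  define u where "u = \<bar>v\<bar>"
  have u: "u > 0" "odd u" using assms(1) unfolding u_def by auto
  have ak: "\<bar>k\<bar> > 0" "odd \<bar>k\<bar>" using assms(2) by auto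
  have cuk: "coprime u \<bar>k\<bar>" using assms(3) unfolding u_def by simp
  have a: "jacobi v \<bar>k\<bar> = (if v < 0 then chi4 \<bar>k\<bar> else 1) * jacobi u \<bar>k\<bar>"
  proof (cases "v < 0")
    case True
    then have "v = -1 * u" unfolding u_def by simp
    then have "jacobi v \<bar>k\<bar> = jacobi (-1) \<bar>k\<bar> * jacobi u \<bar>k\<bar>"
      using jacobi_mult_num[OF ak(2), of "-1" u] by simp
    then show ?thesis using True jacobi_minus1[OF ak] by simp
  next
    case False
    then show ?thesis unfolding u_def by simp
  qed
  have b: "jacobi u \<bar>k\<bar> = e4 u \<bar>k\<bar> * jacobi \<bar>k\<bar> u"
  proof -
    have r: "jacobi u \<bar>k\<bar> * jacobi \<bar>k\<bar> u = e4 u \<bar>k\<bar>" using jacobi_recip[OF u ak cuk] .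
    have s: "jacobi \<bar>k\<bar> u * jacobi \<bar>k\<bar> u = 1" using jacobi_sq[OF u] cuk by (simp add: coprime_commute)
    have "jacobi u \<bar>k\<bar> = jacobi u \<bar>k\<bar> * (jacobi \<bar>k\<bar> u * jacobi \<bar>k\<bar> u)" using s by simp
    also have "\<dots> = e4 u \<bar>k\<bar> * jacobi \<bar>k\<bar> u" using r by (simp add: algebra_simps)
    finally show ?thesis .
  qed
  have c: "jacobi \<bar>k\<bar> u = (if k < 0 then chi4 u else 1) * jacobi k u"
  proof (cases "k < 0")
    case True
    then have "\<bar>k\<bar> = -1 * k" by simp
    then have "jacobi \<bar>k\<bar> u = jacobi (-1) u * jacobi k u"
      using jacobi_mult_num[OF u(2), of "-1" k] by simp
    then show ?thesis using True jacobi_minus1[OF u] by simp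
  next
    case False then show ?thesis by simp
  qed
  have d: "(if v < 0 then chi4 \<bar>k\<bar> else 1) * e4 u \<bar>k\<bar> * (if k < 0 then chi4 u else 1) * sf v k
        = (if v < 0 then chi4 k else 1) * e4 u k"
  proof (cases "k < 0")
    case True
    have v0: "v \<noteq> 0" using assms(1) by auto
    have k1: "chi4 \<bar>k\<bar> = - chi4 k" using True chi4_neg[OF assms(2)] by simp
    have k2: "e4 u \<bar>k\<bar> * chi4 u = e4 u k" using True e4_neg[OF u(2) assms(2)] by simp
    show ?thesis
    proof (cases "v < 0")
      case True
      then show ?thesis using \<open>k < 0\<close> k1 k2 by (simp add: sf_def algebra_simps)
    next
      case False
      then show ?thesis using \<open>k < 0\<close> v0 k2 by (simp add: sf_def algebra_simps)
    qed
  next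
    case False
    then show ?thesis by (simp add: sf_def)
  qed
  have "jacobi v \<bar>k\<bar> * sf v k
      = jacobi k u * ((if v < 0 then chi4 \<bar>k\<bar> else 1) * e4 u \<bar>k\<bar> * (if k < 0 then chi4 u else 1) * sf v k)"
    unfolding a b c by (simp add: algebra_simps)
  also have "\<dots> = jacobi k u * ((if v < 0 then chi4 k else 1) * e4 u k)" using d by simp
  finally show ?thesis unfolding u_def .
qed

lemma KPodd:
  assumes "odd v" "odd n" "odd n'" "coprime v n" "[n' = n] (mod (4 * v))"
  shows "jacobi v \<bar>n'\<bar> * sf v n' = jacobi v \<bar>n\<bar> * sf v n"
proof -
  have c4: "[n' = n] (mod 4)" using assms(5) cong_dvd_modulus[of n' n "4 * v" 4] by simp
  have cu: "[n' = n] (mod \<bar>v\<bar>)" using assms(5) cong_dvd_modulus[of n' n "4 * v" "\<bar>v\<bar>"] by simp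
  have cv: "[n' = n] (mod v)" using assms(5) cong_dvd_modulus[of n' n "4 * v" v] by simp
  have "coprime n v" using assms(4) by (simp add: coprime_commute)
  then have "coprime n' v" using cong_imp_coprime[OF cong_sym[OF cv]] by blast
  then have cop': "coprime v n'" by (simp add: coprime_commute)
  have m: "n' mod 4 = n mod 4" using cong_mod_eq[OF c4] .
  have "chi4 n' = chi4 n" "e4 \<bar>v\<bar> n' = e4 \<bar>v\<bar> n" using m by (simp_all add: chi4_def e4_def)
  moreover have "jacobi n' \<bar>v\<bar> = jacobi n \<bar>v\<bar>" using cu by (rule jacobi_cong)
  ultimately show ?thesis using KPform[OF assms(1,3) cop'] KPform[OF assms(1,2,4)] by simp
qed

lemma KPgen:
  assumes "w \<noteq> 0" "odd n" "odd n'" "coprime w n" "[n' = n] (mod (4 * w))"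
  shows "jacobi w \<bar>n'\<bar> * sf w n' = jacobi w \<bar>n\<bar> * sf w n"
  using assms
proof (induction "nat \<bar>w\<bar>" arbitrary: w rule: less_induct)
  case less
  note h = less.prems
  show ?case
  proof (cases "odd w")
    case True then show ?thesis using KPodd h by blast
  next
    case False
    then obtain w' where w': "w = 2 * w'" by blast
    have w'0: "w' \<noteq> 0" using h(1) w' by simp
    have lt: "nat \<bar>w'\<bar> < nat \<bar>w\<bar>" using w' w'0 by simp
    have cw: "coprime w' n" using h(4) w' by simp
    have c1: "[n' = n] (mod (4 * w'))" using h(5) w' cong_dvd_modulus[of n' n "4 * w" "4 * w'"] by simp
    have c8: "[n' = n] (mod 8)" using h(5) w' cong_dvd_modulus[of n' n "4 * w" 8] by simp
    have IH: "jacobi w' \<bar>n'\<bar> * sf w' n' = jacobi w' \<bar>n\<bar> * sf w' n"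
      using less.hyps[OF lt w'0 h(2,3) cw c1] .
    have e: "jacobi w \<bar>k\<bar> * sf w k = q8 k * (jacobi w' \<bar>k\<bar> * sf w' k)" if "odd k" for k
    proof -
      have "odd \<bar>k\<bar>" using that by simp
      then have "jacobi w \<bar>k\<bar> = jacobi 2 \<bar>k\<bar> * jacobi w' \<bar>k\<bar>" using jacobi_mult_num w' by simp
      moreover have "sf w k = sf w' k" using w' by (simp add: sf_def)
      ultimately show ?thesis using jacobi_two_abs[OF that] by simp
    qed
    show ?thesis using e[OF h(2)] e[OF h(3)] IH q8_cong[OF c8] by simp
  qed
qed

lemma KP:
  assumes "4 dvd c" "coprime c d" "[d' = d] (mod c)"
  shows "kron c d' = kron c d"
proof (cases "c = 0")
  case True then show ?thesis using assms(3) by simp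
next
  case False
  obtain w where w: "c = 4 * w" using assms(1) by blast
  have w0: "w \<noteq> 0" using False w by simp
  have od: "odd d"
  proof
    assume "even d"
    then have "2 dvd c" "2 dvd d" using w by auto
    then show False using assms(2) coprime_common_divisor[of c d 2] by simp
  qed
  have "[d' = d] (mod 2)" using assms(3) w cong_dvd_modulus[of d' d c 2] by simp
  then have "d' mod 2 = d mod 2" by (rule cong_mod_eq)
  then have od': "odd d'" using od by presburger
  have cw: "coprime w d" using assms(2) w by simp
  have f: "kron c k = jacobi w \<bar>k\<bar> * sf w k" if "odd k" for k
  proof -
    have k0: "k \<noteq> 0" using that by auto
    have "odd \<bar>k\<bar>" using that by simp
    then have "jacobi c \<bar>k\<bar> = jacobi 2 \<bar>k\<bar> * jacobi 2 \<bar>k\<bar> * jacobi w \<bar>k\<bar>"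
      using jacobi_mult_num w by (metis mult.assoc numeral_Bit0_eq_double mult_2 one_add_one numeral_times_numeral)
    moreover have "jacobi 2 \<bar>k\<bar> * jacobi 2 \<bar>k\<bar> = 1" using jacobi_two_abs[OF that] q8_sq by simp
    moreover have "sf c k = sf w k" using w by (simp add: sf_def)
    ultimately show ?thesis using kron_alt[OF k0] by simp
  qed
  have "[d' = d] (mod (4 * w))" using assms(3) w by simp
  then show ?thesis using KPgen[OF w0 od od' cw] f[OF od] f[OF od'] by simp
qed

lemma eps_cong: "[d' = d] (mod 4) \<Longrightarrow> eps d' = eps d"
  unfolding eps_def by (metis cong_sym cong_trans)


fun jf :: "mat2 \<Rightarrow> complex \<Rightarrow> complex" where
  "jf (a,b,c,d) z = of_int c * z + of_int d"

fun mob :: "mat2 \<Rightarrow> complex \<Rightarrow> complex" where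
  "mob (a,b,c,d) z = (of_int a * z + of_int b) / (of_int c * z + of_int d)"

lemma mdet_mult: "mdet (mmul g h) = mdet g * mdet h"
  by (cases g; cases h) (simp add: algebra_simps)

lemma mmul_assoc: "mmul (mmul g h) k = mmul g (mmul h k)"
  by (cases g; cases h; cases k) (simp add: algebra_simps)

lemma jf_nz:
  assumes "mdet g = 1" "Im z < 0"
  shows "jf g z \<noteq> 0"
proof -
  obtain a b c d where g: "g = (a,b,c,d)" by (cases g) auto
  show ?thesis
  proof (cases "c = 0")
    case True
    then have "a * d = 1" using assms(1) g by simp
    then have "d \<noteq> 0" by auto
    then show ?thesis using g True by simp
  next
    case False
    have "Im (jf g z) = of_int c * Im z" using g by simp
    moreover have "of_int c * Im z \<noteq> 0" using False assms(2) by simp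
    ultimately show ?thesis by auto
  qed
qed

lemma Im_mob:
  assumes "mdet g = 1" "Im z < 0"
  shows "Im (mob g z) < 0"
proof -
  obtain a b c d where g: "g = (a,b,c,d)" by (cases g) auto
  define x where "x = Re z"
  define y where "y = Im z"
  have det: "real_of_int a * real_of_int d - real_of_int b * real_of_int c = 1"
    using assms(1) g by (metis mdet.simps of_int_1 of_int_diff of_int_mult)
  have nz: "jf g z \<noteq> 0" using jf_nz assms by blast
  define den where "den = (real_of_int c * x + real_of_int d)^2 + (real_of_int c * y)^2"
  have den_pos: "den > 0"
  proof -
    have "Re (jf g z) \<noteq> 0 \<or> Im (jf g z) \<noteq> 0" using nz complex_eq_iff by force
    moreover have "Re (jf g z) = real_of_int c * x + real_of_int d" "Im (jf g z) = real_of_int c * y"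
      using g unfolding x_def y_def by simp_all
    ultimately show ?thesis unfolding den_def by (auto simp: add_pos_nonneg add_nonneg_pos)
  qed
  have "Im (mob g z) = ((real_of_int a * y) * (real_of_int c * x + real_of_int d)
        - (real_of_int a * x + real_of_int b) * (real_of_int c * y)) / den"
    using g unfolding x_def y_def den_def by (simp add: Im_divide power2_eq_square)
  also have "(real_of_int a * y) * (real_of_int c * x + real_of_int d)
        - (real_of_int a * x + real_of_int b) * (real_of_int c * y)
        = y * (real_of_int a * real_of_int d - real_of_int b * real_of_int c)"
    by (simp add: algebra_simps)
  also have "\<dots> = y" using det by simp
  finally show ?thesis using den_pos assms(2) unfolding y_def by (simp add: divide_neg_pos)
qed

lemma jf_mult:
  assumes "jf h z \<noteq> 0"
  shows "jf (mmul g h) z = jf g (mob h z) * jf h z"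
proof -
  obtain a b c d where g: "g = (a,b,c,d)" by (cases g) auto
  obtain a' b' c' d' where h: "h = (a',b',c',d')" by (cases h) auto
  have nz: "of_int c' * z + of_int d' \<noteq> 0" using assms h by simp
  show ?thesis using nz unfolding g h by (simp add: field_simps)
qed

lemma mob_mult:
  assumes "jf h z \<noteq> 0" "jf g (mob h z) \<noteq> 0"
  shows "mob (mmul g h) z = mob g (mob h z)"
proof -
  obtain a b c d where g: "g = (a,b,c,d)" by (cases g) auto
  obtain a' b' c' d' where h: "h = (a',b',c',d')" by (cases h) auto
  define P where "P = of_int a' * z + of_int b'"
  define W where "W = of_int c' * z + of_int d'"
  have W: "W \<noteq> 0" using assms h unfolding W_def by simp
  have e1: "mob (mmul g h) z = (of_int a * P + of_int b * W) / (of_int c * P + of_int d * W)"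
    unfolding g h P_def W_def by (simp add: algebra_simps)
  have mh: "mob h z = P / W" unfolding h P_def W_def by simp
  have n: "of_int a * (P / W) + of_int b = (of_int a * P + of_int b * W) / W" using W by (simp add: field_simps)
  have d: "of_int c * (P / W) + of_int d = (of_int c * P + of_int d * W) / W" using W by (simp add: field_simps)
  have "mob g (mob h z) = (of_int a * (P / W) + of_int b) / (of_int c * (P / W) + of_int d)"
    unfolding mh g by simp
  also have "\<dots> = (of_int a * P + of_int b * W) / (of_int c * P + of_int d * W)"
    unfolding n d using W by simp
  finally show ?thesis using e1 by simp
qed

lemma xfun_nz: "mdet g = 1 \<Longrightarrow> xfun g \<noteq> 0"
  by (cases g) auto

lemma Arg_neg: assumes "Im z < 0" shows "Arg z < 0"
proof (rule ccontr)
  assume "\<not> Arg z < 0"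
  then have "0 \<le> Arg z" by simp
  then have "0 \<le> sin (Arg z)" using sin_ge_zero Arg_bounded[of z] by blast
  moreover have "z \<noteq> 0" using assms by auto
  then have "sin (Arg z) = Im z / cmod z" by (rule sin_Arg)
  moreover have "Im z / cmod z < 0" using assms \<open>z \<noteq> 0\<close> by (simp add: divide_neg_pos)
  ultimately show False by simp
qed

lemma Arg_pos: assumes "Im z > 0" shows "Arg z > 0"
proof (rule ccontr)
  assume "\<not> Arg z > 0"
  then have "0 \<le> - Arg z" "- Arg z \<le> pi" using Arg_bounded[of z] by auto
  then have "0 \<le> sin (- Arg z)" using sin_ge_zero by blast
  moreover have "z \<noteq> 0" using assms by auto
  then have "sin (Arg z) = Im z / cmod z" by (rule sin_Arg)
  moreover have "Im z / cmod z > 0" using assms \<open>z \<noteq> 0\<close> by simp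
  ultimately show False by simp
qed

lemma Arg_posreal: "r > 0 \<Longrightarrow> Arg (complex_of_real r) = 0"
  by (rule cis_Arg_unique) (auto simp: sgn_of_real)

lemma Arg_negreal: "r < 0 \<Longrightarrow> Arg (complex_of_real r) = pi"
  by (rule cis_Arg_unique) (auto simp: sgn_of_real complex_eq_iff)

lemma sign_Arg:
  assumes "mdet g = 1" "Im z < 0"
  shows "0 < xfun g \<longleftrightarrow> Arg (jf g z) \<le> 0"
proof -
  obtain a b c d where g: "g = (a,b,c,d)" by (cases g) auto
  show ?thesis
  proof (cases "c = 0")
    case True
    then have "a * d = 1" using assms(1) g by simp
    then have "d \<noteq> 0" by auto
    have r: "jf g z = of_real (of_int d)" using g True by simp
    show ?thesis
    proof (cases "d > 0")
      case True
      then have "Arg (jf g z) = 0" unfolding r by (intro Arg_posreal) simp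
      then show ?thesis using True g \<open>c = 0\<close> by simp
    next
      case False
      then have "Arg (jf g z) = pi" unfolding r using \<open>d \<noteq> 0\<close> by (intro Arg_negreal) simp
      then show ?thesis using False g \<open>c = 0\<close> \<open>d \<noteq> 0\<close> by (simp add: not_le)
    qed
  next
    case False
    have im: "Im (jf g z) = of_int c * Im z" using g by simp
    show ?thesis
    proof (cases "c > 0")
      case True
      then have "Im (jf g z) < 0" using im assms(2) by (simp add: mult_pos_neg)
      then have "Arg (jf g z) < 0" by (rule Arg_neg)
      then show ?thesis using True g by simp
    next
      case False
      then have "c < 0" using \<open>c \<noteq> 0\<close> by simp
      then have "Im (jf g z) > 0" using im assms(2) by (simp add: mult_neg_neg)
      then have "Arg (jf g z) > 0" by (rule Arg_pos)
      then show ?thesis using \<open>c < 0\<close> g by simp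
    qed
  qed
qed

lemma Arg_mult_2pi:
  assumes "z1 \<noteq> 0" "z2 \<noteq> 0"
  shows "\<exists>m::int. Arg (z1 * z2) = Arg z1 + Arg z2 + 2 * pi * of_int m"
proof -
  have "cis (Arg (z1 * z2)) = cis (Arg z1 + Arg z2)"
    using assms by (simp add: cis_Arg sgn_mult cis_mult[symmetric])
  then have "cis (Arg (z1 * z2) - (Arg z1 + Arg z2)) = 1"
    by (simp add: cis_divide[symmetric])
  then have "cos (Arg (z1 * z2) - (Arg z1 + Arg z2)) = 1"
    by (metis Re_complex_of_real cis.sel(1) one_complex.sel(1))
  then obtain n :: int where "Arg (z1 * z2) - (Arg z1 + Arg z2) = of_int n * 2 * pi"
    using cos_one_2pi_int by blast
  then have "Arg (z1 * z2) = Arg z1 + Arg z2 + 2 * pi * of_int n" by (simp add: algebra_simps)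
  then show ?thesis by blast
qed

lemma cbar_sign:
  assumes "xfun g \<noteq> 0" "xfun h \<noteq> 0" "xfun (mmul g h) \<noteq> 0"
  shows "cbar g h = (if (0 < xfun g) = (0 < xfun h) \<and> (0 < xfun (mmul g h)) \<noteq> (0 < xfun g) then -1 else 1)"
proof -
  define x1 where "x1 = xfun g"
  define x2 where "x2 = xfun h"
  define x3 where "x3 = xfun (mmul g h)"
  have "x1 \<noteq> 0" "x2 \<noteq> 0" "x3 \<noteq> 0" using assms unfolding x1_def x2_def x3_def by auto
  have m: "(- (real_of_int x1 * real_of_int x2) < 0) \<longleftrightarrow> (0 < x1) = (0 < x2)"
    using \<open>x1 \<noteq> 0\<close> \<open>x2 \<noteq> 0\<close> by (auto simp: zero_less_mult_iff mult_less_0_iff)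
  have "cbar g h = hilb (real_of_int x1) (real_of_int x2) * hilb (- (real_of_int x1 * real_of_int x2)) (real_of_int x3)"
    unfolding cbar_def x1_def x2_def x3_def by simp
  then show ?thesis using m \<open>x1 \<noteq> 0\<close> \<open>x2 \<noteq> 0\<close> \<open>x3 \<noteq> 0\<close>
    unfolding x1_def[symmetric] x2_def[symmetric] x3_def[symmetric]
    by (auto simp: hilb_def)
qed

lemma int_range3:
  fixes m :: int
  assumes "2 * pi * of_int m < 3 * pi" "2 * pi * of_int m > - 3 * pi"
  shows "m = -1 \<or> m = 0 \<or> m = 1"
proof -
  have "pi * (2 * of_int m) < pi * 3" using assms(1) by (simp add: algebra_simps)
  then have "2 * of_int m < (3::real)" using pi_gt_zero mult_less_cancel_left_pos by blast
  then have a: "m < 2" by linarith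
  have "pi * (-3) < pi * (2 * of_int m)" using assms(2) by (simp add: algebra_simps)
  then have "-3 < 2 * (of_int m::real)" using pi_gt_zero mult_less_cancel_left_pos by blast
  then have b: "m > -2" by linarith
  show ?thesis using a b by linarith
qed

lemma sign_arith:
  fixes al be ga :: real and m :: int
  assumes "-pi < al" "al \<le> pi" "-pi < be" "be \<le> pi" "-pi < ga" "ga \<le> pi"
    and eq: "al + be = ga + 2 * pi * of_int m"
  shows "(m = -1 \<or> m = 0 \<or> m = 1) \<and>
     (if (al \<le> 0) = (be \<le> 0) \<and> (ga \<le> 0) \<noteq> (al \<le> 0) then -1 else (1::int)) = (if m = 0 then 1 else -1)"
proof -
  have "m = -1 \<or> m = 0 \<or> m = 1" using assms by (intro int_range3) linarith+
  moreover have "(if (al \<le> 0) = (be \<le> 0) \<and> (ga \<le> 0) \<noteq> (al \<le> 0) then -1 else (1::int)) = (if m = 0 then 1 else -1)"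
    using calculation
  proof (elim disjE)
    assume "m = -1"
    then have "al + be = ga - 2 * pi" using eq by simp
    then show ?thesis using assms(1-6) \<open>m = -1\<close> pi_gt_zero by (smt (verit))
  next
    assume "m = 0"
    then have "al + be = ga" using eq by simp
    then show ?thesis using assms(1-6) \<open>m = 0\<close> pi_gt_zero by (smt (verit))
  next
    assume "m = 1"
    then have "al + be = ga + 2 * pi" using eq by simp
    then show ?thesis using assms(1-6) \<open>m = 1\<close> pi_gt_zero by (smt (verit))
  qed
  ultimately show ?thesis by blast
qed

lemma Arg_bds: "- pi < Arg z" "Arg z \<le> pi"
  using Arg_bounded[of z] by auto

lemma CB:
  assumes "mdet g = 1" "mdet h = 1" "Im z < 0"
  shows "\<exists>m::int. Arg (jf g (mob h z)) + Arg (jf h z) = Arg (jf (mmul g h) z) + 2 * pi * of_int m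
          \<and> (m = -1 \<or> m = 0 \<or> m = 1) \<and> cbar g h = (if m = 0 then 1 else -1)"
proof -
  have w: "Im (mob h z) < 0" using Im_mob assms(2,3) by blast
  have nz1: "jf g (mob h z) \<noteq> 0" using jf_nz assms(1) w by blast
  have nz2: "jf h z \<noteq> 0" using jf_nz assms(2,3) by blast
  have gh: "mdet (mmul g h) = 1" using assms by (simp add: mdet_mult)
  obtain m' :: int where m': "Arg (jf (mmul g h) z) = Arg (jf g (mob h z)) + Arg (jf h z) + 2 * pi * of_int m'"
    using Arg_mult_2pi[OF nz1 nz2] jf_mult[OF nz2] by metis
  define m where "m = - m'"
  have eq: "Arg (jf g (mob h z)) + Arg (jf h z) = Arg (jf (mmul g h) z) + 2 * pi * of_int m"
    using m' unfolding m_def by simp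
  have s1: "0 < xfun g \<longleftrightarrow> Arg (jf g (mob h z)) \<le> 0" using sign_Arg assms(1) w by blast
  have s2: "0 < xfun h \<longleftrightarrow> Arg (jf h z) \<le> 0" using sign_Arg assms(2,3) by blast
  have s3: "0 < xfun (mmul g h) \<longleftrightarrow> Arg (jf (mmul g h) z) \<le> 0" using sign_Arg gh assms(3) by blast
  have cb: "cbar g h = (if (0 < xfun g) = (0 < xfun h) \<and> (0 < xfun (mmul g h)) \<noteq> (0 < xfun g) then -1 else 1)"
    using cbar_sign xfun_nz assms(1,2) gh by blast
  have "(m = -1 \<or> m = 0 \<or> m = 1) \<and> cbar g h = (if m = 0 then 1 else -1)"
    unfolding cb s1 s2 s3 using sign_arith[OF Arg_bds Arg_bds Arg_bds eq] by blast
  then show ?thesis using eq by blast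
qed

lemma sigma_parity: "m = -1 \<or> m = 0 \<or> m = (1::int) \<Longrightarrow> (if m = 0 then 1 else -1) = (if even m then 1 else (-1::int))"
  by auto

lemma cocycle:
  assumes "mdet g = 1" "mdet h = 1" "mdet k = 1"
  shows "cbar g h * cbar (mmul g h) k = cbar g (mmul h k) * cbar h k"
proof -
  define z :: complex where "z = - \<i>"
  have z: "Im z < 0" unfolding z_def by simp
  define w where "w = mob k z"
  have w: "Im w < 0" unfolding w_def using Im_mob assms(3) z by blast
  have gh: "mdet (mmul g h) = 1" and hk: "mdet (mmul h k) = 1" using assms by (simp_all add: mdet_mult)
  have nzk: "jf k z \<noteq> 0" using jf_nz assms(3) z by blast
  have nzh: "jf h w \<noteq> 0" using jf_nz assms(2) w by blast
  have mv: "mob (mmul h k) z = mob h w" unfolding w_def using mob_mult nzk nzh w_def by blast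
  obtain m1 where m1: "Arg (jf g (mob h w)) + Arg (jf h w) = Arg (jf (mmul g h) w) + 2 * pi * of_int m1"
     "m1 = -1 \<or> m1 = 0 \<or> m1 = 1" "cbar g h = (if m1 = 0 then 1 else -1)"
    using CB[OF assms(1,2) w] by blast
  obtain m2 where m2: "Arg (jf (mmul g h) w) + Arg (jf k z) = Arg (jf (mmul (mmul g h) k) z) + 2 * pi * of_int m2"
     "m2 = -1 \<or> m2 = 0 \<or> m2 = 1" "cbar (mmul g h) k = (if m2 = 0 then 1 else -1)"
    using CB[OF gh assms(3) z] unfolding w_def by blast
  obtain m3 where m3: "Arg (jf g (mob h w)) + Arg (jf (mmul h k) z) = Arg (jf (mmul g (mmul h k)) z) + 2 * pi * of_int m3"
     "m3 = -1 \<or> m3 = 0 \<or> m3 = 1" "cbar g (mmul h k) = (if m3 = 0 then 1 else -1)"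
    using CB[OF assms(1) hk z] unfolding mv by blast
  obtain m4 where m4: "Arg (jf h w) + Arg (jf k z) = Arg (jf (mmul h k) z) + 2 * pi * of_int m4"
     "m4 = -1 \<or> m4 = 0 \<or> m4 = 1" "cbar h k = (if m4 = 0 then 1 else -1)"
    using CB[OF assms(2,3) z] unfolding w_def by blast
  have "2 * pi * of_int (m1 + m2) = 2 * pi * of_int (m3 + m4)"
    using m1(1) m2(1) m3(1) m4(1) unfolding mmul_assoc by (simp add: algebra_simps)
  then have s: "m1 + m2 = m3 + m4" by simp
  have "cbar g h * cbar (mmul g h) k = (if even m1 then 1 else -1) * (if even m2 then 1 else -1)"
    using m1(2,3) m2(2,3) sigma_parity by simp
  also have "\<dots> = (if even (m1 + m2) then 1 else -1)" by auto
  also have "\<dots> = (if even (m3 + m4) then 1 else -1)" using s by simp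
  also have "\<dots> = (if even m3 then 1 else -1) * (if even m4 then 1 else -1)" by auto
  also have "\<dots> = cbar g (mmul h k) * cbar h k"
    using m3(2,3) m4(2,3) sigma_parity by simp
  finally show ?thesis .
qed


fun sm :: "mat2 \<Rightarrow> complex" where
  "sm (a,b,c,d) = of_int (kron c d) * inverse (eps d)"

definition PP :: "mat2 \<Rightarrow> mat2 \<Rightarrow> bool" where
  "PP g h \<longleftrightarrow> sm (mmul g h) * of_int (cbar g h) = sm g * sm h"

definition T0 :: mat2 where "T0 = (1,1,0,1)"
definition Ti0 :: mat2 where "Ti0 = (1,-1,0,1)"
definition L0 :: mat2 where "L0 = (1,0,4,1)"
definition Li0 :: mat2 where "Li0 = (1,0,-4,1)"
definition mI0 :: mat2 where "mI0 = (-1,0,0,-1)"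
definition I0 :: mat2 where "I0 = (1,0,0,1)"

lemma G4_iff: "(a,b,c,d) \<in> Gamma0 M \<longleftrightarrow> a * d - b * c = 1 \<and> M dvd c"
  by (simp add: Gamma0_def)

lemma det_coprime: "a * d - b * c = (1::int) \<Longrightarrow> coprime c d"
proof (rule coprimeI)
  fix k assume h: "a * d - b * c = 1" "k dvd c" "k dvd d"
  have "k dvd a * d - b * c" using h(2,3) by (simp add: dvd_diff)
  then have "k dvd 1" using h(1) by simp
  then show "is_unit k" by simp
qed

lemma G4_facts:
  assumes "(a,b,c,d) \<in> Gamma0 4"
  shows "a * d - b * c = 1" "4 dvd c" "odd d" "odd a" "coprime c d" "d \<noteq> 0"
proof -
  show det: "a * d - b * c = 1" and c4: "4 dvd c" using assms by (auto simp: G4_iff)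
  have ec: "even c" using c4 by (metis dvd_trans even_numeral)
  show od: "odd d"
  proof
    assume "even d" then have "even (a * d - b * c)" using ec by simp
    then show False using det by simp
  qed
  show "odd a"
  proof
    assume "even a" then have "even (a * d - b * c)" using ec by simp
    then show False using det by simp
  qed
  show "coprime c d" using det_coprime[OF det] .
  show "d \<noteq> 0" using od by auto
qed

lemma cbar_pm: "cbar g h = 1 \<or> cbar g h = -1"
  by (auto simp: cbar_def hilb_def)

lemma eps_1 [simp]: "eps 1 = 1" by (simp add: eps_def)

lemma sm_I [simp]: "sm I0 = 1" by (simp add: I0_def kron_def)

lemma mmul_I [simp]: "mmul g I0 = g" by (cases g) (simp add: I0_def)
lemma mmul_I1 [simp]: "mmul I0 g = g" by (cases g) (simp add: I0_def)

lemma cbar_I [simp]: "mdet g = 1 \<Longrightarrow> cbar g I0 = 1"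
proof -
  assume g: "mdet g = 1"
  obtain a b c d where gg: "g = (a,b,c,d)" by (cases g) auto
  have "xfun g \<noteq> 0" using xfun_nz[OF g] .
  then show ?thesis using cbar_sign[of g I0] unfolding gg by (simp add: I0_def)
qed

lemma PP_I: "mdet g = 1 \<Longrightarrow> PP g I0"
  by (simp add: PP_def)

lemma PP_T:
  assumes "(a,b,c,d) \<in> Gamma0 4"
  shows "PP (a,b,c,d) T0"
proof -
  have det: "a * d - b * c = 1" and c4: "4 dvd c" using assms by (auto simp: G4_iff)
  have g1: "mdet (a,b,c,d) = 1" using det by simp
  have m: "mmul (a,b,c,d) T0 = (a, a + b, c, c + d)" by (simp add: T0_def)
  have x: "xfun (a, a + b, c, c + d) = xfun (a,b,c,d)" by simp
  have cb: "cbar (a,b,c,d) T0 = 1"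
    using cbar_sign[of "(a,b,c,d)" T0] xfun_nz[OF g1] m x by (simp add: T0_def)
  have k: "kron c (c + d) = kron c d"
    by (rule KP[OF c4 det_coprime[OF det]]) (simp add: cong_iff_dvd_diff)
  have e: "eps (c + d) = eps d"
    by (rule eps_cong) (use c4 in \<open>simp add: cong_iff_dvd_diff\<close>)
  have "sm T0 = 1" by (simp add: T0_def kron_def)
  then show ?thesis unfolding PP_def m cb using k e by simp
qed

lemma PP_Ti:
  assumes "(a,b,c,d) \<in> Gamma0 4"
  shows "PP (a,b,c,d) Ti0"
proof -
  have det: "a * d - b * c = 1" and c4: "4 dvd c" using assms by (auto simp: G4_iff)
  have g1: "mdet (a,b,c,d) = 1" using det by simp
  have m: "mmul (a,b,c,d) Ti0 = (a, b - a, c, d - c)" by (simp add: Ti0_def)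
  have x: "xfun (a, b - a, c, d - c) = xfun (a,b,c,d)" by simp
  have cb: "cbar (a,b,c,d) Ti0 = 1"
    using cbar_sign[of "(a,b,c,d)" Ti0] xfun_nz[OF g1] m x by (simp add: Ti0_def)
  have k: "kron c (d - c) = kron c d"
    by (rule KP[OF c4 det_coprime[OF det]]) (simp add: cong_iff_dvd_diff)
  have e: "eps (d - c) = eps d"
    by (rule eps_cong) (use c4 in \<open>simp add: cong_iff_dvd_diff\<close>)
  have "sm Ti0 = 1" by (simp add: Ti0_def kron_def)
  then show ?thesis unfolding PP_def m cb using k e by simp
qed

lemma sign_L:
  fixes c d :: int
  assumes "d \<noteq> 0"
  shows "sf (c + 4 * d) d * (if (0 < (if c = 0 then d else c)) = True \<and>
       (0 < (if c + 4 * d = 0 then d else c + 4 * d)) \<noteq> (0 < (if c = 0 then d else c)) then -1 else 1) = sf c d"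
  using assms unfolding sf_def by auto
lemma sign_Li:
  fixes c d :: int
  assumes "d \<noteq> 0"
  shows "sf (c - 4 * d) d * (if (0 < (if c = 0 then d else c)) = False \<and>
       (0 < (if c - 4 * d = 0 then d else c - 4 * d)) \<noteq> (0 < (if c = 0 then d else c)) then -1 else 1) = sf c d"
  using assms unfolding sf_def by auto

lemma PP_L:
  assumes "(a,b,c,d) \<in> Gamma0 4"
  shows "PP (a,b,c,d) L0"
proof -
  have det: "a * d - b * c = 1" and c4: "4 dvd c" using assms by (auto simp: G4_iff)
  have g1: "mdet (a,b,c,d) = 1" using det by simp
  have d0: "d \<noteq> 0" using G4_facts(6)[OF assms] .
  have m: "mmul (a,b,c,d) L0 = (a + 4 * b, b, c + 4 * d, d)" by (simp add: L0_def algebra_simps)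
  have g2: "mdet (a + 4 * b, b, c + 4 * d, d) = 1" using det by (simp add: algebra_simps)
  have cb: "cbar (a,b,c,d) L0 = (if (0 < (if c = 0 then d else c)) = True \<and>
       (0 < (if c + 4 * d = 0 then d else c + 4 * d)) \<noteq> (0 < (if c = 0 then d else c)) then -1 else 1)"
    using cbar_sign[of "(a,b,c,d)" L0, unfolded m] xfun_nz[OF g1] xfun_nz[OF g2] by (simp add: L0_def)
  have j: "jacobi (c + 4 * d) \<bar>d\<bar> = jacobi c \<bar>d\<bar>"
    by (rule jacobi_cong) (simp add: cong_iff_dvd_diff)
  have "kron (c + 4 * d) d * cbar (a,b,c,d) L0 = kron c d"
    unfolding kron_alt[OF d0] j cb using sign_L[OF d0, of c] by (simp add: mult.assoc)
  moreover have "sm L0 = 1" by (simp add: L0_def kron_def)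
  ultimately show ?thesis unfolding PP_def m
    by (simp add: of_int_mult[symmetric] del: of_int_mult)
qed


lemma PP_Li:
  assumes "(a,b,c,d) \<in> Gamma0 4"
  shows "PP (a,b,c,d) Li0"
proof -
  have det: "a * d - b * c = 1" and c4: "4 dvd c" using assms by (auto simp: G4_iff)
  have g1: "mdet (a,b,c,d) = 1" using det by simp
  have d0: "d \<noteq> 0" using G4_facts(6)[OF assms] .
  have m: "mmul (a,b,c,d) Li0 = (a - 4 * b, b, c - 4 * d, d)" by (simp add: Li0_def algebra_simps)
  have g2: "mdet (a - 4 * b, b, c - 4 * d, d) = 1" using det by (simp add: algebra_simps)
  have cb: "cbar (a,b,c,d) Li0 = (if (0 < (if c = 0 then d else c)) = False \<and>
       (0 < (if c - 4 * d = 0 then d else c - 4 * d)) \<noteq> (0 < (if c = 0 then d else c)) then -1 else 1)"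
    using cbar_sign[of "(a,b,c,d)" Li0, unfolded m] xfun_nz[OF g1] xfun_nz[OF g2] by (simp add: Li0_def)
  have j: "jacobi (c - 4 * d) \<bar>d\<bar> = jacobi c \<bar>d\<bar>"
    by (rule jacobi_cong) (simp add: cong_iff_dvd_diff)
  have "kron (c - 4 * d) d * cbar (a,b,c,d) Li0 = kron c d"
    unfolding kron_alt[OF d0] j cb using sign_Li[OF d0, of c] by (simp add: mult.assoc)
  moreover have "sm Li0 = 1" by (simp add: Li0_def kron_def)
  ultimately show ?thesis unfolding PP_def m
    by (simp add: of_int_mult[symmetric] del: of_int_mult)
qed

lemma eps_alt: "eps d = (if d mod 4 = 1 then 1 else \<i>)"
proof -
  have "[d = 1] (mod 4) \<longleftrightarrow> d mod 4 = 1" by (simp add: cong_iff_dvd_diff) presburger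
  then show ?thesis by (simp add: eps_def)
qed

lemma eps_neg: "odd d \<Longrightarrow> inverse (eps (-d)) = - of_int (chi4 d) * \<i> * inverse (eps d)"
proof -
  assume "odd d"
  then have "d mod 4 = 1 \<or> d mod 4 = 3" "(-d) mod 4 = 1 \<longleftrightarrow> d mod 4 = 3" by presburger+
  then show ?thesis by (auto simp: eps_alt chi4_def)
qed

lemma mI_int:
  fixes c d :: int
  assumes "odd d"
  shows "chi4 \<bar>d\<bar> * sf (- c) (- d) * (if (if c = 0 then d else c) < 0 then -1 else 1) * (- chi4 d) = sf c d"
proof -
  have cc: "chi4 d * chi4 d = 1" by (simp add: chi4_def)
  have "chi4 \<bar>d\<bar> * (- chi4 d) = (if d < 0 then 1 else -1)"
    using chi4_neg[OF assms] cc by auto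
  then show ?thesis using assms unfolding sf_def
    by (cases "d < 0") (auto simp: algebra_simps)
qed

lemma PP_mI:
  assumes "(a,b,c,d) \<in> Gamma0 4"
  shows "PP (a,b,c,d) mI0"
proof -
  have det: "a * d - b * c = 1" using assms by (auto simp: G4_iff)
  have od: "odd d" and d0: "d \<noteq> 0" using G4_facts[OF assms] by auto
  have g1: "mdet (a,b,c,d) = 1" using det by simp
  have m: "mmul (a,b,c,d) mI0 = (- a, - b, - c, - d)" by (simp add: mI0_def)
  have g2: "mdet (- a, - b, - c, - d) = 1" using det by simp
  have cb: "cbar (a,b,c,d) mI0 = (if (if c = 0 then d else c) < 0 then -1 else 1)"
    using cbar_sign[of "(a,b,c,d)" mI0, unfolded m] xfun_nz[OF g1] xfun_nz[OF g2] by (auto simp: mI0_def)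
  have smI: "sm mI0 = \<i>" by (simp add: mI0_def kron_def eps_alt)
  have k1: "kron (- c) (- d) = chi4 \<bar>d\<bar> * jacobi c \<bar>d\<bar> * sf (- c) (- d)"
  proof -
    have "odd \<bar>d\<bar>" "\<bar>d\<bar> > 0" using od by auto
    then have "jacobi (- c) \<bar>d\<bar> = chi4 \<bar>d\<bar> * jacobi c \<bar>d\<bar>"
      using jacobi_mult_num[of "\<bar>d\<bar>" "-1" c] jacobi_minus1[of "\<bar>d\<bar>"] by simp
    then show ?thesis using kron_alt[of "-d" "-c"] d0 by simp
  qed
  have k2: "kron c d = jacobi c \<bar>d\<bar> * sf c d" using kron_alt d0 by blast
  have "sm (- a, - b, - c, - d) * of_int (cbar (a,b,c,d) mI0)
      = of_int (jacobi c \<bar>d\<bar>) * inverse (eps d) * \<i> *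
        of_int (chi4 \<bar>d\<bar> * sf (- c) (- d) * (if (if c = 0 then d else c) < 0 then -1 else 1) * (- chi4 d))"
    unfolding cb using eps_neg[OF od] k1 by (simp add: algebra_simps)
  also have "\<dots> = of_int (kron c d) * inverse (eps d) * \<i>" unfolding mI_int[OF od] k2 by (simp add: algebra_simps)
  also have "\<dots> = sm (a,b,c,d) * sm mI0" using smI by simp
  finally show ?thesis unfolding PP_def m .
qed

definition QQ :: "mat2 \<Rightarrow> bool" where
  "QQ h \<longleftrightarrow> h \<in> Gamma0 4 \<and> (\<forall>g\<in>Gamma0 4. PP g h)"

lemma G0_mult: "g \<in> Gamma0 M \<Longrightarrow> h \<in> Gamma0 M \<Longrightarrow> mmul g h \<in> Gamma0 M"
  by (cases g; cases h) (auto simp: Gamma0_def algebra_simps)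

lemma G0_det: "g \<in> Gamma0 M \<Longrightarrow> mdet g = 1"
  by (cases g) (auto simp: Gamma0_def)

lemma QQ_mult:
  assumes "QQ x" "QQ y"
  shows "QQ (mmul x y)"
  unfolding QQ_def
proof (intro conjI ballI)
  show xy: "mmul x y \<in> Gamma0 4" using assms G0_mult unfolding QQ_def by blast
  fix g assume g: "g \<in> Gamma0 4"
  have gx: "mmul g x \<in> Gamma0 4" using g assms G0_mult unfolding QQ_def by blast
  have h1: "sm (mmul (mmul g x) y) * of_int (cbar (mmul g x) y) = sm (mmul g x) * sm y"
    using assms(2) gx unfolding QQ_def PP_def by blast
  have h2: "sm (mmul g x) * of_int (cbar g x) = sm g * sm x"
    using assms(1) g unfolding QQ_def PP_def by blast
  have h3: "sm (mmul x y) * of_int (cbar x y) = sm x * sm y"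
    using assms unfolding QQ_def PP_def by blast
  have coc: "cbar g x * cbar (mmul g x) y = cbar g (mmul x y) * cbar x y"
    using cocycle G0_det g assms unfolding QQ_def by blast
  have c4: "of_int (cbar x y) \<noteq> (0::complex)" using cbar_pm[of x y] by auto
  have "sm (mmul g (mmul x y)) * of_int (cbar g (mmul x y)) * of_int (cbar x y)
       = sm (mmul (mmul g x) y) * (of_int (cbar g x * cbar (mmul g x) y))"
    unfolding coc mmul_assoc by (simp add: algebra_simps)
  also have "\<dots> = (sm (mmul (mmul g x) y) * of_int (cbar (mmul g x) y)) * of_int (cbar g x)"
    by (simp add: algebra_simps)
  also have "\<dots> = sm y * (sm (mmul g x) * of_int (cbar g x))" unfolding h1 by (simp add: algebra_simps)
  also have "\<dots> = sm g * (sm x * sm y)" unfolding h2 by (simp add: algebra_simps)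
  also have "\<dots> = sm g * sm (mmul x y) * of_int (cbar x y)" unfolding h3[symmetric] by (simp add: algebra_simps)
  finally have "sm (mmul g (mmul x y)) * of_int (cbar g (mmul x y)) * of_int (cbar x y)
      = sm g * sm (mmul x y) * of_int (cbar x y)" .
  then show "PP g (mmul x y)" unfolding PP_def using c4 by simp
qed

lemma QQ_gens: "QQ T0" "QQ Ti0" "QQ L0" "QQ Li0" "QQ mI0" "QQ I0"
  unfolding QQ_def
  by (auto simp: T0_def Ti0_def L0_def Li0_def mI0_def I0_def Gamma0_def
      intro: PP_T[unfolded T0_def] PP_Ti[unfolded Ti0_def] PP_L[unfolded L0_def] PP_Li[unfolded Li0_def]
        PP_mI[unfolded mI0_def] PP_I[unfolded I0_def])


lemma QQ_Tpow: "QQ (1, b, 0, 1)"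
proof (induction b rule: int_induct[where k=0])
  case base then show ?case using QQ_gens(6) by (simp add: I0_def)
next
  case (step1 i)
  have "mmul (1, i, 0, 1) T0 = (1, i + 1, 0, 1)" by (simp add: T0_def)
  then show ?case using QQ_mult[OF step1(2) QQ_gens(1)] by simp
next
  case (step2 i)
  have "mmul (1, i, 0, 1) Ti0 = (1, i - 1, 0, 1)" by (simp add: Ti0_def)
  then show ?case using QQ_mult[OF step2(2) QQ_gens(2)] by simp
qed

lemma QQ_c0:
  assumes "(a, b, 0, d) \<in> Gamma0 4"
  shows "QQ (a, b, 0, d)"
proof -
  have ad: "a * d = 1" using assms by (simp add: G4_iff)
  then have "a dvd 1" by (metis dvd_triv_left)
  then have "\<bar>a\<bar> = 1" by simp
  then have "a = 1 \<or> a = -1" by auto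
  then show ?thesis
  proof
    assume "a = 1" then have "d = 1" using ad by simp
    then show ?thesis using QQ_Tpow \<open>a = 1\<close> by simp
  next
    assume "a = -1" then have "d = -1" using ad by simp
    have "mmul (1, -b, 0, 1) mI0 = (-1, b, 0, -1)" by (simp add: mI0_def)
    then show ?thesis using QQ_mult[OF QQ_Tpow[of "-b"] QQ_gens(5)] \<open>a = -1\<close> \<open>d = -1\<close> by simp
  qed
qed

lemma descent_arith:
  fixes c d :: int
  assumes "c \<noteq> 0" "d \<noteq> 0" "\<bar>c\<bar> \<noteq> \<bar>d\<bar>" "\<bar>c\<bar> \<noteq> 2 * \<bar>d\<bar>"
  shows "\<bar>c + d\<bar> < \<bar>d\<bar> \<or> \<bar>d - c\<bar> < \<bar>d\<bar> \<or> \<bar>c + 4 * d\<bar> < \<bar>c\<bar> \<or> \<bar>c - 4 * d\<bar> < \<bar>c\<bar>"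
  using assms by arith

lemma QQ_all_aux:
  assumes "(a, b, c, d) \<in> Gamma0 4"
  shows "QQ (a, b, c, d)"
  using assms
proof (induction "nat (\<bar>c\<bar> + \<bar>d\<bar>)" arbitrary: a b c d rule: less_induct)
  case less
  note h = less.prems
  show ?case
  proof (cases "c = 0")
    case True then show ?thesis using QQ_c0 h by simp
  next
    case False
    have det: "a * d - b * c = 1" and c4: "4 dvd c" and od: "odd d" and cop: "coprime c d" and d0: "d \<noteq> 0"
      using G4_facts[OF h] by auto
    have c4a: "4 \<le> \<bar>c\<bar>" using dvd_imp_le_int[OF False c4] by simp
    have ne1: "\<bar>c\<bar> \<noteq> \<bar>d\<bar>"
    proof
      assume "\<bar>c\<bar> = \<bar>d\<bar>"
      then have "c dvd d" by (metis abs_dvd_iff dvd_abs_iff dvd_refl)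
      then have "c dvd 1" using cop coprime_common_divisor[of c d c] by simp
      then show False using c4a by simp
    qed
    have ne2: "\<bar>c\<bar> \<noteq> 2 * \<bar>d\<bar>"
    proof -
      have "4 dvd \<bar>c\<bar>" using c4 by simp
      moreover have "odd \<bar>d\<bar>" using od by simp
      ultimately show ?thesis by presburger
    qed
    have G: "mmul (a, b, c, d) X \<in> Gamma0 4" if "X \<in> Gamma0 4" for X using G0_mult h that by blast
    have gens: "T0 \<in> Gamma0 4" "Ti0 \<in> Gamma0 4" "L0 \<in> Gamma0 4" "Li0 \<in> Gamma0 4"
      using QQ_gens unfolding QQ_def by auto
    consider "\<bar>c + d\<bar> < \<bar>d\<bar>" | "\<bar>d - c\<bar> < \<bar>d\<bar>" | "\<bar>c + 4 * d\<bar> < \<bar>c\<bar>" | "\<bar>c - 4 * d\<bar> < \<bar>c\<bar>"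
      using descent_arith[OF False d0 ne1 ne2] by blast
    then show ?thesis
    proof cases
      case 1
      have m: "mmul (a, b, c, d) T0 = (a, a + b, c, c + d)" by (simp add: T0_def)
      have q: "QQ (a, a + b, c, c + d)" using less.hyps[of c "c + d" a "a + b"] 1 G[OF gens(1)] m by simp
      have "mmul (a, a + b, c, c + d) Ti0 = (a, b, c, d)" by (simp add: Ti0_def)
      then show ?thesis using QQ_mult[OF q QQ_gens(2)] by simp
    next
      case 2
      have m: "mmul (a, b, c, d) Ti0 = (a, b - a, c, d - c)" by (simp add: Ti0_def)
      have q: "QQ (a, b - a, c, d - c)" using less.hyps[of c "d - c" a "b - a"] 2 G[OF gens(2)] m by simp
      have "mmul (a, b - a, c, d - c) T0 = (a, b, c, d)" by (simp add: T0_def)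
      then show ?thesis using QQ_mult[OF q QQ_gens(1)] by simp
    next
      case 3
      have m: "mmul (a, b, c, d) L0 = (a + 4 * b, b, c + 4 * d, d)" by (simp add: L0_def algebra_simps)
      have q: "QQ (a + 4 * b, b, c + 4 * d, d)" using less.hyps[of "c + 4 * d" d "a + 4 * b" b] 3 G[OF gens(3)] m by simp
      have "mmul (a + 4 * b, b, c + 4 * d, d) Li0 = (a, b, c, d)" by (simp add: Li0_def algebra_simps)
      then show ?thesis using QQ_mult[OF q QQ_gens(4)] by simp
    next
      case 4
      have m: "mmul (a, b, c, d) Li0 = (a - 4 * b, b, c - 4 * d, d)" by (simp add: Li0_def algebra_simps)
      have q: "QQ (a - 4 * b, b, c - 4 * d, d)" using less.hyps[of "c - 4 * d" d "a - 4 * b" b] 4 G[OF gens(4)] m by simp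
      have "mmul (a - 4 * b, b, c - 4 * d, d) L0 = (a, b, c, d)" by (simp add: L0_def algebra_simps)
      then show ?thesis using QQ_mult[OF q QQ_gens(3)] by simp
    qed
  qed
qed

theorem MULT:
  assumes "g \<in> Gamma0 4" "h \<in> Gamma0 4"
  shows "sm (mmul g h) * of_int (cbar g h) = sm g * sm h"
proof -
  obtain a b c d where hh: "h = (a,b,c,d)" by (cases h) auto
  have "QQ h" using QQ_all_aux assms(2) unfolding hh by blast
  then show ?thesis using assms(1) unfolding QQ_def PP_def by blast
qed


lemma mpg_carrier: "x \<in> carrier (mp_group S) \<longleftrightarrow> fst x \<in> S \<and> (snd x = 1 \<or> snd x = -1)"
  by (cases x) (auto simp: mp_group_def)

lemma mpg_mult [simp]: "mult (mp_group S) = mp_mult"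
  by (simp add: mp_group_def)

lemma mpg_one [simp]: "one (mp_group S) = ((1,0,0,1),1)"
  by (simp add: mp_group_def)

lemma mp_mult_eq: "mp_mult x y = (mmul (fst x) (fst y), cbar (fst x) (fst y) * snd x * snd y)"
  by (cases x; cases y) simp

lemma mp_assoc:
  assumes "mdet (fst x) = 1" "mdet (fst y) = 1" "mdet (fst z) = 1"
  shows "mp_mult (mp_mult x y) z = mp_mult x (mp_mult y z)"
proof -
  have c: "cbar (fst x) (fst y) * cbar (mmul (fst x) (fst y)) (fst z) =
           cbar (fst x) (mmul (fst y) (fst z)) * cbar (fst y) (fst z)"
    using cocycle assms by blast
  have "cbar (mmul (fst x) (fst y)) (fst z) * (cbar (fst x) (fst y) * snd x * snd y) * snd z
      = (cbar (fst x) (fst y) * cbar (mmul (fst x) (fst y)) (fst z)) * (snd x * snd y * snd z)"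
    by (simp only: mult_ac)
  also have "\<dots> = (cbar (fst x) (mmul (fst y) (fst z)) * cbar (fst y) (fst z)) * (snd x * snd y * snd z)"
    unfolding c ..
  also have "\<dots> = cbar (fst x) (mmul (fst y) (fst z)) * snd x * (cbar (fst y) (fst z) * snd y * snd z)"
    by (simp only: mult_ac)
  finally show ?thesis unfolding mp_mult_eq by (simp add: mmul_assoc)
qed

lemma mp_closed:
  assumes "x \<in> carrier (mp_group (Gamma0 M))" "y \<in> carrier (mp_group (Gamma0 M))"
  shows "mp_mult x y \<in> carrier (mp_group (Gamma0 M))"
  using assms G0_mult cbar_pm[of "fst x" "fst y"] unfolding mpg_carrier mp_mult_eq by auto

lemma mp_one_r: "mdet (fst x) = 1 \<Longrightarrow> mp_mult x ((1,0,0,1),1) = x"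
  using cbar_I[of "fst x"] mmul_I[of "fst x"] unfolding mp_mult_eq I0_def by (cases x) simp

lemma mp_one_l: "mp_mult ((1,0,0,1),1) x = x"
proof -
  obtain a b c d e where x: "x = ((a,b,c,d),e)" by (cases x) auto
  have "cbar (1,0,0,1) (a,b,c,d) = 1" by (simp add: cbar_def hilb_def)
  then show ?thesis unfolding x by simp
qed

lemma vs_fsc: "vector_space (fsc :: complex \<Rightarrow> ('a \<Rightarrow> complex) \<Rightarrow> ('a \<Rightarrow> complex))"
proof (unfold_locales)
  fix a b :: complex and x y :: "'a \<Rightarrow> complex"
  show "fsc a (x + y) = fsc a x + fsc a y" unfolding fsc_def plus_fun_def by (simp add: distrib_left)
  show "fsc (a + b) x = fsc a x + fsc b x" unfolding fsc_def plus_fun_def by (simp add: distrib_right)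
  show "fsc a (fsc b x) = fsc (a * b) x" unfolding fsc_def by (simp add: mult.assoc)
  show "fsc 1 x = x" unfolding fsc_def by simp
qed

lemma mod_fsc: "Modules.module (fsc :: complex \<Rightarrow> ('a \<Rightarrow> complex) \<Rightarrow> ('a \<Rightarrow> complex))"
proof (unfold_locales)
  fix a b :: complex and x y :: "'a \<Rightarrow> complex"
  show "fsc a (x + y) = fsc a x + fsc a y" unfolding fsc_def plus_fun_def by (simp add: distrib_left)
  show "fsc (a + b) x = fsc a x + fsc b x" unfolding fsc_def plus_fun_def by (simp add: distrib_right)
  show "fsc a (fsc b x) = fsc (a * b) x" unfolding fsc_def by (simp add: mult.assoc)
  show "fsc 1 x = x" unfolding fsc_def by simp
qed

lemma subspace_fsc: "Modules.module.subspace fsc S \<longleftrightarrow> 0 \<in> S \<and> (\<forall>x\<in>S. \<forall>y\<in>S. x + y \<in> S) \<and> (\<forall>c. \<forall>x\<in>S. fsc c x \<in> S)"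
  by (rule Modules.module.subspace_def[OF mod_fsc])

lemma cong2_odd: "[a = 1] (mod 2) \<longleftrightarrow> odd (a::int)"
  by (simp add: cong_iff_dvd_diff)

lemma cong2_even: "[a = 0] (mod 2) \<longleftrightarrow> even (a::int)"
  by (simp add: cong_0_iff)

lemma dchar_period:
  assumes "dirichlet_char N \<chi>"
  shows "\<chi> (n + k * N) = \<chi> n"
proof (induction k rule: int_induct[where k=0])
  case base then show ?case by simp
next
  case (step1 i)
  have "\<chi> (n + (i + 1) * N) = \<chi> ((n + i * N) + N)" by (simp add: algebra_simps)
  also have "\<dots> = \<chi> (n + i * N)" using assms unfolding dirichlet_char_def by blast
  finally show ?case using step1 by simp
next
  case (step2 i)
  have "\<chi> (n + i * N) = \<chi> ((n + (i - 1) * N) + N)" by (simp add: algebra_simps)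
  also have "\<dots> = \<chi> (n + (i - 1) * N)" using assms unfolding dirichlet_char_def by blast
  finally show ?case using step2 by simp
qed

lemma dchar_cong:
  assumes "dirichlet_char N \<chi>" "N dvd (m - n)"
  shows "\<chi> m = \<chi> n"
proof -
  obtain k where "m - n = N * k" using assms(2) by blast
  then have "m = n + k * N" by (simp add: algebra_simps)
  then show ?thesis using dchar_period[OF assms(1)] by simp
qed

lemma dchar_mult: "dirichlet_char N \<chi> \<Longrightarrow> \<chi> (m * n) = \<chi> m * \<chi> n"
  unfolding dirichlet_char_def by blast

lemma dchar_1: "dirichlet_char N \<chi> \<Longrightarrow> \<chi> 1 = 1"
  unfolding dirichlet_char_def by blast

lemma lam_G2_q8:
  assumes "odd d"
  shows "lam_G2 (a,b,c,d) = of_int (q8 d) * sm (a,b,c,d)"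
  using kron_2c[OF assms, of c] by simp

context
  fixes N :: int and \<chi> :: "int \<Rightarrow> complex"
  assumes N2: "N \<ge> 2" and Nev: "even N" and prim: "primitive_dirichlet_char N \<chi>"
begin

lemma dch: "dirichlet_char N \<chi>" using prim unfolding primitive_dirichlet_char_def by blast

lemma N4: "4 dvd N^2"
  using Nev by (auto simp: power2_eq_square)

lemma G_sub4: "g \<in> Gamma0 (N^2) \<Longrightarrow> g \<in> Gamma0 4"
  using N4 by (cases g) (auto simp: Gamma0_def intro: dvd_trans)

lemma HH_iff:
  "((a,b,c,d),e) \<in> carrier (mp_group (Gamma_theta \<inter> Gamma0 (N^2))) \<longleftrightarrow>
   ((a,b,c,d),e) \<in> carrier (mp_group (Gamma0 (N^2))) \<and> even b"
proof -
  have "(a,b,c,d) \<in> Gamma_theta \<inter> Gamma0 (N^2) \<longleftrightarrow> (a,b,c,d) \<in> Gamma0 (N^2) \<and> even b"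
  proof
    assume h: "(a,b,c,d) \<in> Gamma_theta \<inter> Gamma0 (N^2)"
    then have g4: "(a,b,c,d) \<in> Gamma0 4" using G_sub4 by blast
    have "odd d" using G4_facts(3)[OF g4] .
    moreover have "2 dvd b * d" using h by (simp add: Gamma_theta_def)
    ultimately show "(a,b,c,d) \<in> Gamma0 (N^2) \<and> even b" using h by auto
  next
    assume h: "(a,b,c,d) \<in> Gamma0 (N^2) \<and> even b"
    then have g4: "(a,b,c,d) \<in> Gamma0 4" using G_sub4 by blast
    have "even c" using G4_facts(2)[OF g4] by (metis dvd_trans even_numeral)
    then show "(a,b,c,d) \<in> Gamma_theta \<inter> Gamma0 (N^2)" using h by (auto simp: Gamma_theta_def Gamma0_def)
  qed
  then show ?thesis unfolding mpg_carrier by auto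
qed

lemma lam_bar_mult:
  assumes x: "x \<in> carrier (mp_group (Gamma_theta \<inter> Gamma0 (N^2)))"
      and y: "y \<in> carrier (mp_group (Gamma_theta \<inter> Gamma0 (N^2)))"
  shows "lam_bar \<chi> (mp_mult x y) = lam_bar \<chi> x * lam_bar \<chi> y"
proof -
  obtain a1 b1 c1 d1 e1 where xx: "x = ((a1,b1,c1,d1),e1)" by (cases x) auto
  obtain a2 b2 c2 d2 e2 where yy: "y = ((a2,b2,c2,d2),e2)" by (cases y) auto
  have xg: "(a1,b1,c1,d1) \<in> Gamma0 (N^2)" "even b1" using x HH_iff unfolding xx mpg_carrier by auto
  have yg: "(a2,b2,c2,d2) \<in> Gamma0 (N^2)" "even b2" using y HH_iff unfolding yy mpg_carrier by auto
  have x4: "(a1,b1,c1,d1) \<in> Gamma0 4" and y4: "(a2,b2,c2,d2) \<in> Gamma0 4" using xg yg G_sub4 by auto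
  note f1 = G4_facts[OF x4] and f2 = G4_facts[OF y4]
  define g3 where "g3 = mmul (a1,b1,c1,d1) (a2,b2,c2,d2)"
  have g3e: "g3 = (a1 * a2 + b1 * c2, a1 * b2 + b1 * d2, c1 * a2 + d1 * c2, c1 * b2 + d1 * d2)"
    unfolding g3_def by simp
  have g34: "g3 \<in> Gamma0 4" unfolding g3_def using G0_mult x4 y4 by blast
  have g3N: "g3 \<in> Gamma0 (N^2)" unfolding g3_def using G0_mult xg yg by blast
  have ec1: "even c1" "even c2" using f1(2) f2(2) by (metis dvd_trans even_numeral)+
  have inG2: "(a,b,c,d) \<in> Gamma2" if "(a,b,c,d) \<in> Gamma0 4" "even b" for a b c d
  proof -
    note ff = G4_facts[OF that(1)]
    have "even c" using ff(2) by (metis dvd_trans even_numeral)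
    then show ?thesis using ff that(2) by (simp add: Gamma2_def cong2_odd cong2_even)
  qed
  have b3: "even (a1 * b2 + b1 * d2)" using xg(2) yg(2) by simp
  have lam1: "lam (a1,b1,c1,d1) = of_int (q8 d1) * sm (a1,b1,c1,d1)"
    using inG2[OF x4 xg(2)] lam_G2_q8[OF f1(3)] by (simp add: lam_def)
  have lam2: "lam (a2,b2,c2,d2) = of_int (q8 d2) * sm (a2,b2,c2,d2)"
    using inG2[OF y4 yg(2)] lam_G2_q8[OF f2(3)] by (simp add: lam_def)
  have od3: "odd (c1 * b2 + d1 * d2)" using G4_facts(3)[OF g34[unfolded g3e]] .
  have g3G2: "g3 \<in> Gamma2" using inG2[OF g34[unfolded g3e] b3] unfolding g3e .
  have "lam g3 = lam_G2 g3" using g3G2 unfolding lam_def by simp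
  also have "\<dots> = of_int (q8 (c1 * b2 + d1 * d2)) * sm g3" unfolding g3e by (rule lam_G2_q8[OF od3])
  finally have lam3: "lam g3 = of_int (q8 (c1 * b2 + d1 * d2)) * sm g3" .
  have q: "q8 (c1 * b2 + d1 * d2) = q8 d1 * q8 d2"
  proof -
    obtain k where k: "c1 = 4 * k" using f1(2) by blast
    obtain j where j: "b2 = 2 * j" using yg(2) by blast
    have "c1 * b2 = 8 * (k * j)" unfolding k j by simp
    then have "8 dvd c1 * b2" by simp
    then have "[c1 * b2 + d1 * d2 = d1 * d2] (mod 8)" by (simp add: cong_iff_dvd_diff)
    then show ?thesis using q8_cong q8_mult f1(3) f2(3) by metis
  qed
  have ch: "\<chi> (c1 * b2 + d1 * d2) = \<chi> d1 * \<chi> d2"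
  proof -
    have "N dvd c1" using xg(1) by (auto simp: Gamma0_def power2_eq_square intro: dvd_trans dvd_mult_left)
    then have "N dvd (c1 * b2 + d1 * d2) - d1 * d2" by simp
    then show ?thesis using dchar_cong[OF dch] dchar_mult[OF dch] by metis
  qed
  have M: "sm g3 * of_int (cbar (a1,b1,c1,d1) (a2,b2,c2,d2)) = sm (a1,b1,c1,d1) * sm (a2,b2,c2,d2)"
    using MULT[OF x4 y4] unfolding g3_def .
  have "lam_bar \<chi> (mp_mult x y) = lam g3 * \<chi> (c1 * b2 + d1 * d2) * of_int (cbar (a1,b1,c1,d1) (a2,b2,c2,d2) * e1 * e2)"
    unfolding xx yy lam_bar_def by (simp add: g3_def[symmetric] g3e)
  also have "\<dots> = of_int (q8 d1 * q8 d2) * \<chi> d1 * \<chi> d2 * of_int (e1 * e2) * (sm g3 * of_int (cbar (a1,b1,c1,d1) (a2,b2,c2,d2)))"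
    unfolding lam3 q ch by (simp add: algebra_simps)
  also have "\<dots> = lam_bar \<chi> x * lam_bar \<chi> y"
    unfolding M xx yy lam_bar_def using lam1 lam2 by (simp add: algebra_simps)
  finally show ?thesis .
qed

end


definition e0 :: mp where "e0 = ((1,0,0,1),1)"
definition tt :: mp where "tt = ((1,1,0,1),1)"
definition ti :: mp where "ti = ((1,-1,0,1),1)"

definition F1 :: "int \<Rightarrow> (int \<Rightarrow> complex) \<Rightarrow> mp \<Rightarrow> complex" where
  "F1 N \<chi> x = (if x \<in> carrier (mp_group (Gamma_theta \<inter> Gamma0 (N^2))) then inverse (lam_bar \<chi> x) else 0)"

definition F2 :: "int \<Rightarrow> (int \<Rightarrow> complex) \<Rightarrow> mp \<Rightarrow> complex" where
  "F2 N \<chi> x = (if x \<in> carrier (mp_group (Gamma0 (N^2))) \<and> x \<notin> carrier (mp_group (Gamma_theta \<inter> Gamma0 (N^2)))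
      then inverse (lam_bar \<chi> (mp_mult x ti)) else 0)"

lemma cbar_T_left: "mdet g = 1 \<Longrightarrow> cbar (1,1,0,1) g = 1"
  by (cases g) (auto simp: cbar_def hilb_def mult_less_0_iff zero_less_mult_iff)

lemma cbar_Ti_right: "mdet g = 1 \<Longrightarrow> cbar g (1,-1,0,1) = 1"
  by (cases g) (auto simp: cbar_def hilb_def mult_less_0_iff zero_less_mult_iff)

lemma cbar_T_right: "mdet g = 1 \<Longrightarrow> cbar g (1,1,0,1) = 1"
  by (cases g) (auto simp: cbar_def hilb_def mult_less_0_iff zero_less_mult_iff)

context
  fixes N :: int and \<chi> :: "int \<Rightarrow> complex"
  assumes N2: "N \<ge> 2" and Nev: "even N" and prim: "primitive_dirichlet_char N \<chi>"
begin

abbreviation "GG \<equiv> mp_group (Gamma0 (N^2))"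
abbreviation "HH \<equiv> carrier (mp_group (Gamma_theta \<inter> Gamma0 (N^2)))"
abbreviation "psi \<equiv> (\<lambda>h. inverse (lam_bar \<chi> h))"
abbreviation "VV \<equiv> ind_space GG HH psi"
abbreviation "f1 \<equiv> F1 N \<chi>"
abbreviation "f2 \<equiv> F2 N \<chi>"

lemmas HH_iff' = HH_iff[OF N2 Nev prim]
lemmas lam_bar_mult' = lam_bar_mult[OF N2 Nev prim]
lemmas G_sub4' = G_sub4[OF N2 Nev prim]
lemmas dch' = dch[OF N2 Nev prim]

lemma HH_sub: "x \<in> HH \<Longrightarrow> x \<in> carrier GG"
  unfolding mpg_carrier by auto

lemma G_det: "x \<in> carrier GG \<Longrightarrow> mdet (fst x) = 1"
  unfolding mpg_carrier using G0_det by blast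

lemma HH_par:
  assumes "((a,b,c,d),e) \<in> carrier GG"
  shows "((a,b,c,d),e) \<in> HH \<longleftrightarrow> even b"
  using HH_iff' assms by blast

lemma G_facts:
  assumes "((a,b,c,d),e) \<in> carrier GG"
  shows "odd a" "odd d" "even c" "N^2 dvd c" "a * d - b * c = 1" "e = 1 \<or> e = -1"
proof -
  have g: "(a,b,c,d) \<in> Gamma0 (N^2)" "e = 1 \<or> e = -1" using assms unfolding mpg_carrier by auto
  have g4: "(a,b,c,d) \<in> Gamma0 4" using G_sub4' g(1) by blast
  show "odd a" "odd d" using G4_facts[OF g4] by auto
  show "even c" using G4_facts(2)[OF g4] by (metis dvd_trans even_numeral)
  show "N^2 dvd c" "a * d - b * c = 1" using g(1) by (auto simp: Gamma0_def)
  show "e = 1 \<or> e = -1" using g(2) .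
qed

lemma G_mult: "x \<in> carrier GG \<Longrightarrow> y \<in> carrier GG \<Longrightarrow> mp_mult x y \<in> carrier GG"
  by (rule mp_closed)

lemma G_assoc: "x \<in> carrier GG \<Longrightarrow> y \<in> carrier GG \<Longrightarrow> z \<in> carrier GG \<Longrightarrow>
   mp_mult (mp_mult x y) z = mp_mult x (mp_mult y z)"
  using mp_assoc G_det by blast

lemma HH_prod:
  assumes "x \<in> carrier GG" "y \<in> carrier GG"
  shows "mp_mult x y \<in> HH \<longleftrightarrow> (x \<in> HH \<longleftrightarrow> y \<in> HH)"
proof -
  obtain a1 b1 c1 d1 e1 where xx: "x = ((a1,b1,c1,d1),e1)" by (cases x) auto
  obtain a2 b2 c2 d2 e2 where yy: "y = ((a2,b2,c2,d2),e2)" by (cases y) auto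
  note fx = G_facts[OF assms(1)[unfolded xx]] and fy = G_facts[OF assms(2)[unfolded yy]]
  have m: "mp_mult x y = ((a1 * a2 + b1 * c2, a1 * b2 + b1 * d2, c1 * a2 + d1 * c2, c1 * b2 + d1 * d2),
     cbar (a1,b1,c1,d1) (a2,b2,c2,d2) * e1 * e2)" unfolding xx yy by simp
  have mG: "mp_mult x y \<in> carrier GG" using G_mult assms by blast
  have "mp_mult x y \<in> HH \<longleftrightarrow> even (a1 * b2 + b1 * d2)" using HH_par mG unfolding m by blast
  also have "\<dots> \<longleftrightarrow> (even b1 \<longleftrightarrow> even b2)" using fx(1) fy(2) by auto
  also have "\<dots> \<longleftrightarrow> (x \<in> HH \<longleftrightarrow> y \<in> HH)" using HH_par assms unfolding xx yy by blast
  finally show ?thesis .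
qed

lemma e0_G: "e0 \<in> carrier GG" unfolding e0_def mpg_carrier by (simp add: Gamma0_def)
lemma tt_G: "tt \<in> carrier GG" unfolding tt_def mpg_carrier by (simp add: Gamma0_def)
lemma ti_G: "ti \<in> carrier GG" unfolding ti_def mpg_carrier by (simp add: Gamma0_def)
lemma e0_H: "e0 \<in> HH" using HH_par e0_G unfolding e0_def by simp
lemma tt_nH: "tt \<notin> HH" using HH_par tt_G unfolding tt_def by simp
lemma ti_nH: "ti \<notin> HH" using HH_par ti_G unfolding ti_def by simp

lemma G_one: "x \<in> carrier GG \<Longrightarrow> mp_mult x e0 = x"
  unfolding e0_def using mp_one_r G_det by blast

lemma G_one_l: "mp_mult e0 x = x"
  unfolding e0_def by (rule mp_one_l)

lemma tt_ti: "mp_mult tt ti = e0"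
  unfolding tt_def ti_def e0_def using cbar_Ti_right[of "(1,1,0,1)"] by simp

lemma ti_tt: "mp_mult ti tt = e0"
  unfolding tt_def ti_def e0_def using cbar_T_right[of "(1,-1,0,1)"] by simp

lemma ttt: "mp_mult tt tt = ((1,2,0,1),1)"
  unfolding tt_def using cbar_T_right[of "(1,1,0,1)"] by simp

lemma ttt_H: "mp_mult tt tt \<in> HH"
  unfolding ttt using HH_par[of 1 2 0 1 1] by (simp add: mpg_carrier Gamma0_def)

lemma lam_one: "lam (1, 2 * k, 0, 1) = 1"
proof -
  have "(1, 2 * k, 0, (1::int)) \<in> Gamma2" by (simp add: Gamma2_def cong2_odd cong2_even)
  then show ?thesis by (simp add: lam_def kron_def)
qed

lemma psi_ttt: "psi (mp_mult tt tt) = 1"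
  unfolding ttt lam_bar_def using lam_one[of 1] dchar_1[OF dch'] by simp

lemma psi_e0: "psi e0 = 1"
  unfolding e0_def lam_bar_def using lam_one[of 0] dchar_1[OF dch'] by simp

lemma psi_mult: "x \<in> HH \<Longrightarrow> y \<in> HH \<Longrightarrow> psi (mp_mult x y) = psi x * psi y"
  using lam_bar_mult' by (simp add: inverse_mult_distrib)

lemma decomp:
  assumes "x \<in> carrier GG" "x \<notin> HH"
  shows "mp_mult x ti \<in> HH" "mp_mult (mp_mult x ti) tt = x"
proof -
  show "mp_mult x ti \<in> HH" using HH_prod[OF assms(1) ti_G] assms(2) ti_nH by blast
  have "mp_mult (mp_mult x ti) tt = mp_mult x (mp_mult ti tt)" using G_assoc assms(1) ti_G tt_G by blast
  then show "mp_mult (mp_mult x ti) tt = x" using ti_tt G_one assms(1) by simp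
qed

lemma VV_iff: "f \<in> VV \<longleftrightarrow> (\<forall>x. x \<notin> carrier GG \<longrightarrow> f x = 0) \<and>
   (\<forall>h\<in>HH. \<forall>x\<in>carrier GG. f (mp_mult h x) = psi h * f x)"
  unfolding ind_space_def by simp

lemma f1_V: "f1 \<in> VV"
  unfolding VV_iff
proof (intro conjI allI impI ballI)
  fix x assume "x \<notin> carrier GG"
  then have "x \<notin> HH" using HH_sub by blast
  then show "f1 x = 0" unfolding F1_def by simp
next
  fix h x assume h: "h \<in> HH" and x: "x \<in> carrier GG"
  have hG: "h \<in> carrier GG" using HH_sub h by blast
  show "f1 (mp_mult h x) = psi h * f1 x"
  proof (cases "x \<in> HH")
    case True
    then have "mp_mult h x \<in> HH" using HH_prod[OF hG x] h by blast
    then show ?thesis using True psi_mult[OF h True] unfolding F1_def by simp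
  next
    case False
    then have "mp_mult h x \<notin> HH" using HH_prod[OF hG x] h by blast
    then show ?thesis using False unfolding F1_def by simp
  qed
qed

lemma f2_V: "f2 \<in> VV"
  unfolding VV_iff
proof (intro conjI allI impI ballI)
  fix x assume "x \<notin> carrier GG" then show "f2 x = 0" unfolding F2_def by auto
next
  fix h x assume h: "h \<in> HH" and x: "x \<in> carrier GG"
  have hG: "h \<in> carrier GG" using HH_sub h by blast
  have hxG: "mp_mult h x \<in> carrier GG" using G_mult hG x by blast
  show "f2 (mp_mult h x) = psi h * f2 x"
  proof (cases "x \<in> HH")
    case True
    then have "mp_mult h x \<in> HH" using HH_prod[OF hG x] h by blast
    then show ?thesis using True unfolding F2_def by simp
  next
    case False
    then have n: "mp_mult h x \<notin> HH" using HH_prod[OF hG x] h by blast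
    have xt: "mp_mult x ti \<in> HH" using decomp(1)[OF x False] .
    have "mp_mult (mp_mult h x) ti = mp_mult h (mp_mult x ti)" using G_assoc hG x ti_G by blast
    then have "psi (mp_mult (mp_mult h x) ti) = psi h * psi (mp_mult x ti)" using psi_mult[OF h xt] by simp
    then show ?thesis using False n hxG x unfolding F2_def by simp
  qed
qed

lemma f_vals: "f1 e0 = 1" "f1 tt = 0" "f2 e0 = 0" "f2 tt = 1"
proof -
  show "f1 e0 = 1" using e0_H psi_e0 unfolding F1_def by simp
  show "f1 tt = 0" using tt_nH unfolding F1_def by simp
  show "f2 e0 = 0" using e0_H unfolding F2_def by simp
  show "f2 tt = 1" using tt_nH tt_G tt_ti psi_e0 unfolding F2_def by simp
qed

lemma V_span:
  assumes "f \<in> VV"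
  shows "f = fsc (f e0) f1 + fsc (f tt) f2"
proof
  fix x
  have z: "\<forall>x. x \<notin> carrier GG \<longrightarrow> f x = 0" and eq: "\<forall>h\<in>HH. \<forall>x\<in>carrier GG. f (mp_mult h x) = psi h * f x"
    using assms unfolding VV_iff by auto
  show "f x = (fsc (f e0) f1 + fsc (f tt) f2) x"
  proof (cases "x \<in> carrier GG")
    case False
    then have "x \<notin> HH" using HH_sub by blast
    moreover have "f x = 0" using z False by blast
    ultimately show ?thesis using False unfolding fsc_def F1_def F2_def by simp
  next
    case xG: True
    show ?thesis
    proof (cases "x \<in> HH")
      case True
      have "f x = f (mp_mult x e0)" using G_one xG by simp
      also have "\<dots> = psi x * f e0" using eq True e0_G by blast
      finally show ?thesis using True unfolding fsc_def F1_def F2_def by simp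
    next
      case False
      have "f x = f (mp_mult (mp_mult x ti) tt)" using decomp(2)[OF xG False] by simp
      also have "\<dots> = psi (mp_mult x ti) * f tt" using eq decomp(1)[OF xG False] tt_G by blast
      finally show ?thesis using False xG unfolding fsc_def F1_def F2_def by simp
    qed
  qed
qed

lemma V_sub: "Modules.module.subspace fsc VV"
  unfolding subspace_fsc
proof (intro conjI ballI allI)
  show "0 \<in> VV" unfolding VV_iff by simp
next
  fix x y assume "x \<in> VV" "y \<in> VV"
  then show "x + y \<in> VV" unfolding VV_iff by (simp add: distrib_left)
next
  fix c x assume "x \<in> VV"
  then show "fsc c x \<in> VV" unfolding VV_iff fsc_def by (simp add: algebra_simps)
qed

lemma f12_ne: "f1 \<noteq> f2" "f1 \<noteq> 0" "f2 \<noteq> 0"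
proof -
  show "f1 \<noteq> f2"
  proof
    assume "f1 = f2" then have "f1 e0 = f2 e0" by simp
    then show False using f_vals by simp
  qed
  show "f1 \<noteq> 0"
  proof
    assume "f1 = 0" then have "f1 e0 = 0" by simp
    then show False using f_vals by simp
  qed
  show "f2 \<noteq> 0"
  proof
    assume "f2 = 0" then have "f2 tt = 0" by simp
    then show False using f_vals by simp
  qed
qed

lemma V_dim: "rep_dim VV = 2"
proof -
  have vs: "vector_space (fsc :: complex \<Rightarrow> (mp \<Rightarrow> complex) \<Rightarrow> (mp \<Rightarrow> complex))" by (rule vs_fsc)
  have md: "Modules.module (fsc :: complex \<Rightarrow> (mp \<Rightarrow> complex) \<Rightarrow> (mp \<Rightarrow> complex))" by (rule mod_fsc)
  have B: "{f1, f2} \<subseteq> VV" using f1_V f2_V by blast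
  have S: "VV \<subseteq> Modules.module.span fsc {f1, f2}"
  proof
    fix f assume "f \<in> VV"
    have a: "fsc (f e0) f1 \<in> Modules.module.span fsc {f1, f2}"
      by (intro Modules.module.span_scale[OF md] Modules.module.span_base[OF md]) simp
    have b: "fsc (f tt) f2 \<in> Modules.module.span fsc {f1, f2}"
      by (intro Modules.module.span_scale[OF md] Modules.module.span_base[OF md]) simp
    show "f \<in> Modules.module.span fsc {f1, f2}"
      using V_span[OF \<open>f \<in> VV\<close>] Modules.module.span_add[OF md a b] by simp
  qed
  have I: "\<not> Modules.module.dependent fsc {f1, f2}"
  proof -
    have n2: "\<not> Modules.module.dependent fsc {f2}"
      using vector_space.dependent_single[OF vs] f12_ne(3) by simp
    have "f1 \<notin> Modules.module.span fsc {f2}"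
    proof
      assume "f1 \<in> Modules.module.span fsc {f2}"
      then obtain k where "f1 = fsc k f2" using Modules.module.span_singleton[OF md] by blast
      then have "f1 e0 = k * f2 e0" unfolding fsc_def by simp
      then show False using f_vals by simp
    qed
    then show ?thesis using vector_space.independent_insertI[OF vs _ n2] by blast
  qed
  have "card {f1, f2} = 2" using f12_ne(1) by simp
  then show ?thesis unfolding rep_dim_def using vector_space.dim_unique[OF vs B S I] by blast
qed

end


lemma act_lin: "ind_act G g (fsc u f + fsc v h) = fsc u (ind_act G g f) + fsc v (ind_act G g h)"
  by (auto simp: ind_act_def fsc_def fun_eq_iff)

lemma act_add: "ind_act G g (f + h) = ind_act G g f + ind_act G g h"
  by (auto simp: ind_act_def fun_eq_iff)

lemma act_fsc: "ind_act G g (fsc u f) = fsc u (ind_act G g f)"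
  by (auto simp: ind_act_def fsc_def fun_eq_iff)

context
  fixes N :: int and \<chi> :: "int \<Rightarrow> complex"
  assumes N2: "N \<ge> 2" and Nev: "even N" and prim: "primitive_dirichlet_char N \<chi>"
begin

abbreviation "GX \<equiv> mp_group (Gamma0 (N^2))"
abbreviation "HX \<equiv> carrier (mp_group (Gamma_theta \<inter> Gamma0 (N^2)))"
abbreviation "ps \<equiv> (\<lambda>h. inverse (lam_bar \<chi> h))"
abbreviation "VX \<equiv> ind_space GX HX ps"
abbreviation "fa \<equiv> F1 N \<chi>"
abbreviation "fb \<equiv> F2 N \<chi>"

lemmas HH_sub' = HH_sub[OF N2 Nev prim]
lemmas G_facts' = G_facts[OF N2 Nev prim]
lemmas G_mult' = G_mult[OF N2 Nev prim]
lemmas G_assoc' = G_assoc[OF N2 Nev prim]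
lemmas HH_prod' = HH_prod[OF N2 Nev prim]
lemmas HH_par' = HH_par[OF N2 Nev prim]
lemmas e0_G' = e0_G[OF N2 Nev prim]
lemmas tt_G' = tt_G[OF N2 Nev prim]
lemmas ti_G' = ti_G[OF N2 Nev prim]
lemmas e0_H' = e0_H[OF N2 Nev prim]
lemmas tt_nH' = tt_nH[OF N2 Nev prim]
lemmas G_one' = G_one[OF N2 Nev prim]
lemmas ttt_H' = ttt_H[OF N2 Nev prim]
lemmas psi_ttt' = psi_ttt[OF N2 Nev prim]
lemmas psi_e0' = psi_e0[OF N2 Nev prim]
lemmas psi_mult' = psi_mult[OF N2 Nev prim]
lemmas decomp' = decomp[OF N2 Nev prim]
lemmas VV_iff' = VV_iff[OF N2 Nev prim]
lemmas f1_V' = f1_V[OF N2 Nev prim]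
lemmas f2_V' = f2_V[OF N2 Nev prim]
lemmas f_vals' = f_vals[OF N2 Nev prim]
lemmas V_span' = V_span[OF N2 Nev prim]
lemmas V_sub' = V_sub[OF N2 Nev prim]
lemmas f12_ne' = f12_ne[OF N2 Nev prim]
lemmas dch'' = dch[OF N2 Nev prim]
lemmas tt_ti' = tt_ti[OF N2 Nev prim]

lemma act_comp:
  assumes "g \<in> carrier GX" "h \<in> carrier GX"
  shows "ind_act GX (mp_mult g h) f = ind_act GX g (ind_act GX h f)"
proof
  fix x
  show "ind_act GX (mp_mult g h) f x = ind_act GX g (ind_act GX h f) x"
  proof (cases "x \<in> carrier GX")
    case True
    have "mp_mult x g \<in> carrier GX" using G_mult' True assms(1) by blast
    moreover have "mp_mult x (mp_mult g h) = mp_mult (mp_mult x g) h" using G_assoc' True assms by metis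
    ultimately show ?thesis using True unfolding ind_act_def by simp
  next
    case False then show ?thesis unfolding ind_act_def by simp
  qed
qed

lemma act_one: "f \<in> VX \<Longrightarrow> ind_act GX e0 f = f"
proof
  fix x assume f: "f \<in> VX"
  show "ind_act GX e0 f x = f x"
  proof (cases "x \<in> carrier GX")
    case True then show ?thesis unfolding ind_act_def using G_one' by simp
  next
    case False
    have "f x = 0" using f False unfolding VV_iff' by blast
    then show ?thesis using False unfolding ind_act_def by simp
  qed
qed

lemma act_V:
  assumes "g \<in> carrier GX" "f \<in> VX"
  shows "ind_act GX g f \<in> VX"
  unfolding VV_iff'
proof (intro conjI allI impI ballI)
  fix x assume "x \<notin> carrier GX" then show "ind_act GX g f x = 0" unfolding ind_act_def by simp
next
  fix h x assume h: "h \<in> HX" and x: "x \<in> carrier GX"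
  have hG: "h \<in> carrier GX" using HH_sub' h by blast
  have hx: "mp_mult h x \<in> carrier GX" using G_mult' hG x by blast
  have xg: "mp_mult x g \<in> carrier GX" using G_mult' x assms(1) by blast
  have "f (mp_mult (mp_mult h x) g) = f (mp_mult h (mp_mult x g))" using G_assoc' hG x assms(1) by metis
  also have "\<dots> = ps h * f (mp_mult x g)" using assms(2) h xg unfolding VV_iff' by blast
  finally show "ind_act GX g f (mp_mult h x) = ps h * ind_act GX g f x"
    unfolding ind_act_def using hx x by simp
qed

lemma rep: "complex_rep GX (ind_act GX) VX"
  unfolding complex_rep_def
proof (intro conjI ballI allI)
  show "Modules.module.subspace fsc VX" by (rule V_sub')
next
  fix g v assume "g \<in> carrier GX" "v \<in> VX" then show "ind_act GX g v \<in> VX" by (rule act_V)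
next
  fix g v w show "ind_act GX g (v + w) = ind_act GX g v + ind_act GX g w" by (rule act_add)
next
  fix g c v show "ind_act GX g (fsc c v) = fsc c (ind_act GX g v)" by (rule act_fsc)
next
  fix v assume "v \<in> VX" then show "ind_act GX \<one>\<^bsub>GX\<^esub> v = v" using act_one unfolding e0_def by simp
next
  fix g h v assume "g \<in> carrier GX" "h \<in> carrier GX"
  then show "ind_act GX (g \<otimes>\<^bsub>GX\<^esub> h) v = ind_act GX g (ind_act GX h v)" using act_comp by simp
qed

lemma A1:
  assumes g: "g \<in> HX"
  shows "ind_act GX g fa = fsc (ps g) fa"
proof
  fix x
  have gG: "g \<in> carrier GX" using HH_sub' g by blast
  show "ind_act GX g fa x = fsc (ps g) fa x"
  proof (cases "x \<in> carrier GX")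
    case False
    then have "x \<notin> HX" using HH_sub' by blast
    then show ?thesis using False unfolding ind_act_def fsc_def F1_def by simp
  next
    case xG: True
    show ?thesis
    proof (cases "x \<in> HX")
      case True
      then have "mp_mult x g \<in> HX" using HH_prod'[OF xG gG] g by blast
      then show ?thesis using True xG psi_mult'[OF True g] unfolding ind_act_def fsc_def F1_def by (simp add: mult.commute)
    next
      case False
      then have "mp_mult x g \<notin> HX" using HH_prod'[OF xG gG] g by blast
      then show ?thesis using False xG unfolding ind_act_def fsc_def F1_def by simp
    qed
  qed
qed

lemma A2:
  assumes g: "g \<in> HX"
  shows "ind_act GX g fb = fsc (ps (mp_mult (mp_mult tt g) ti)) fb"
proof
  fix x
  have gG: "g \<in> carrier GX" using HH_sub' g by blast
  have tg: "mp_mult tt g \<in> carrier GX" using G_mult' tt_G' gG by blast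
  have tgt: "mp_mult (mp_mult tt g) ti \<in> carrier GX" using G_mult' tg ti_G' by blast
  have tgn: "mp_mult tt g \<notin> HX" using HH_prod'[OF tt_G' gG] tt_nH' g by blast
  have tgH: "mp_mult (mp_mult tt g) ti \<in> HX" using decomp'(1)[OF tg tgn] .
  show "ind_act GX g fb x = fsc (ps (mp_mult (mp_mult tt g) ti)) fb x"
  proof (cases "x \<in> carrier GX")
    case False
    then show ?thesis unfolding ind_act_def fsc_def F2_def by simp
  next
    case xG: True
    have xgG: "mp_mult x g \<in> carrier GX" using G_mult' xG gG by blast
    show ?thesis
    proof (cases "x \<in> HX")
      case True
      then have "mp_mult x g \<in> HX" using HH_prod'[OF xG gG] g by blast
      then show ?thesis using True xG unfolding ind_act_def fsc_def F2_def by simp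
    next
      case False
      then have n: "mp_mult x g \<notin> HX" using HH_prod'[OF xG gG] g by blast
      have xt: "mp_mult x ti \<in> HX" using decomp'(1)[OF xG False] .
      have xtG: "mp_mult x ti \<in> carrier GX" using HH_sub' xt by blast
      have "mp_mult (mp_mult x ti) (mp_mult (mp_mult tt g) ti)
          = mp_mult (mp_mult (mp_mult (mp_mult x ti) tt) g) ti"
        using G_assoc' xtG tt_G' gG ti_G' tg G_mult' by metis
      also have "\<dots> = mp_mult (mp_mult x g) ti" using decomp'(2)[OF xG False] by simp
      finally have e: "mp_mult (mp_mult x g) ti = mp_mult (mp_mult x ti) (mp_mult (mp_mult tt g) ti)" by simp
      have "ps (mp_mult (mp_mult x g) ti) = ps (mp_mult x ti) * ps (mp_mult (mp_mult tt g) ti)"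
        unfolding e using psi_mult'[OF xt tgH] .
      then show ?thesis using False xG n xgG unfolding ind_act_def fsc_def F2_def by (simp add: mult.commute)
    qed
  qed
qed

lemma A3: "ind_act GX tt fa = fb"
proof
  fix x
  show "ind_act GX tt fa x = fb x"
  proof (cases "x \<in> carrier GX")
    case False then show ?thesis unfolding ind_act_def F2_def by simp
  next
    case xG: True
    show ?thesis
    proof (cases "x \<in> HX")
      case True
      then have "mp_mult x tt \<notin> HX" using HH_prod'[OF xG tt_G'] tt_nH' by blast
      then show ?thesis using True xG unfolding ind_act_def F1_def F2_def by simp
    next
      case False
      have xt: "mp_mult x ti \<in> HX" using decomp'(1)[OF xG False] .
      have xtG: "mp_mult x ti \<in> carrier GX" using HH_sub' xt by blast
      have "mp_mult x tt = mp_mult (mp_mult (mp_mult x ti) tt) tt" using decomp'(2)[OF xG False] by simp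
      also have "\<dots> = mp_mult (mp_mult x ti) (mp_mult tt tt)" using G_assoc' xtG tt_G' by blast
      finally have e: "mp_mult x tt = mp_mult (mp_mult x ti) (mp_mult tt tt)" .
      have H: "mp_mult x tt \<in> HX" unfolding e using HH_prod' xtG G_mult'[OF tt_G' tt_G'] xt ttt_H' by blast
      have "ps (mp_mult x tt) = ps (mp_mult x ti)" unfolding e using psi_mult'[OF xt ttt_H'] psi_ttt' by simp
      then show ?thesis using False xG H unfolding ind_act_def F1_def F2_def by simp
    qed
  qed
qed

lemma A4: "ind_act GX tt fb = fa"
proof
  fix x
  show "ind_act GX tt fb x = fa x"
  proof (cases "x \<in> carrier GX")
    case False
    then have "x \<notin> HX" using HH_sub' by blast
    then show ?thesis using False unfolding ind_act_def F1_def by simp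
  next
    case xG: True
    have xtG: "mp_mult x tt \<in> carrier GX" using G_mult' xG tt_G' by blast
    show ?thesis
    proof (cases "x \<in> HX")
      case True
      then have n: "mp_mult x tt \<notin> HX" using HH_prod'[OF xG tt_G'] tt_nH' by blast
      have "mp_mult (mp_mult x tt) ti = mp_mult x (mp_mult tt ti)" using G_assoc' xG tt_G' ti_G' by blast
      also have "\<dots> = x" using tt_ti' G_one' xG by simp
      finally show ?thesis using True xG n xtG unfolding ind_act_def F1_def F2_def by simp
    next
      case False
      then have "mp_mult x tt \<in> HX" using HH_prod'[OF xG tt_G'] tt_nH' by blast
      then show ?thesis using False xG unfolding ind_act_def F1_def F2_def by simp
    qed
  qed
qed

end


lemma fsc_add: "fsc a (f + g) = fsc a f + fsc a g"
  by (simp add: fsc_def fun_eq_iff distrib_left)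

lemma fsc_fsc: "fsc a (fsc b f) = fsc (a * b) f"
  by (simp add: fsc_def fun_eq_iff mult.assoc)

lemma fsc_one: "fsc 1 f = f"
  by (simp add: fsc_def)

lemma fsc_zero: "fsc 0 f = 0"
  by (simp add: fsc_def fun_eq_iff)

lemma fsc_plus: "fsc a f + fsc b f = fsc (a + b) f"
  by (simp add: fsc_def fun_eq_iff distrib_right)

lemma line_irred:
  assumes "p \<noteq> 0" "Modules.module.subspace fsc W" "W \<subseteq> {fsc u p | u. True}"
  shows "W = {0} \<or> W = {fsc u p | u. True}"
proof (cases "W = {0}")
  case True then show ?thesis by simp
next
  case False
  have sub: "0 \<in> W" "\<forall>c. \<forall>x\<in>W. fsc c x \<in> W" using assms(2) unfolding subspace_fsc by auto
  obtain w where w: "w \<in> W" "w \<noteq> 0" using False sub(1) by blast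
  obtain u where u: "w = fsc u p" using w(1) assms(3) by blast
  have u0: "u \<noteq> 0" using w(2) u fsc_zero by auto
  have "{fsc u p | u. True} \<subseteq> W"
  proof
    fix x assume "x \<in> {fsc u p | u. True}"
    then obtain u' where x: "x = fsc u' p" by blast
    have "fsc (u' / u) w = x" unfolding u x fsc_fsc using u0 by simp
    then show "x \<in> W" using sub(2) w(1) by metis
  qed
  then show ?thesis using assms(3) by blast
qed

lemma line_sub: "Modules.module.subspace fsc {fsc u p | u. True}"
  unfolding subspace_fsc
proof (intro conjI ballI allI)
  show "0 \<in> {fsc u p | u. True}" using fsc_zero[of p] by (metis (mono_tags, lifting) mem_Collect_eq)
next
  fix x y assume "x \<in> {fsc u p | u. True}" "y \<in> {fsc u p | u. True}"
  then obtain a b where "x = fsc a p" "y = fsc b p" by blast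
  then show "x + y \<in> {fsc u p | u. True}" using fsc_plus by blast
next
  fix c x assume "x \<in> {fsc u p | u. True}"
  then obtain a where "x = fsc a p" by blast
  then show "fsc c x \<in> {fsc u p | u. True}" using fsc_fsc by blast
qed

context
  fixes N :: int and \<chi> :: "int \<Rightarrow> complex"
  assumes N2: "N \<ge> 2" and Nev: "even N" and prim: "primitive_dirichlet_char N \<chi>"
begin

abbreviation "GZ \<equiv> mp_group (Gamma0 (N^2))"
abbreviation "HZ \<equiv> carrier (mp_group (Gamma_theta \<inter> Gamma0 (N^2)))"
abbreviation "pz \<equiv> (\<lambda>h. inverse (lam_bar \<chi> h))"
abbreviation "VZ \<equiv> ind_space GZ HZ pz"
abbreviation "ga \<equiv> F1 N \<chi>"
abbreviation "gb \<equiv> F2 N \<chi>"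

lemmas HH_sub_4 = HH_sub'[OF N2 Nev prim]
lemmas G_facts_4 = G_facts'[OF N2 Nev prim]
lemmas G_mult_4 = G_mult'[OF N2 Nev prim]
lemmas G_assoc_4 = G_assoc'[OF N2 Nev prim]
lemmas HH_prod_4 = HH_prod'[OF N2 Nev prim]
lemmas HH_par_4 = HH_par'[OF N2 Nev prim]
lemmas e0_G_4 = e0_G'[OF N2 Nev prim]
lemmas tt_G_4 = tt_G'[OF N2 Nev prim]
lemmas ti_G_4 = ti_G'[OF N2 Nev prim]
lemmas e0_H_4 = e0_H'[OF N2 Nev prim]
lemmas tt_nH_4 = tt_nH'[OF N2 Nev prim]
lemmas G_one_4 = G_one'[OF N2 Nev prim]
lemmas decomp_4 = decomp'[OF N2 Nev prim]
lemmas VV_iff_4 = VV_iff'[OF N2 Nev prim]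
lemmas f1_V_4 = f1_V'[OF N2 Nev prim]
lemmas f2_V_4 = f2_V'[OF N2 Nev prim]
lemmas f_vals_4 = f_vals'[OF N2 Nev prim]
lemmas V_span_4 = V_span'[OF N2 Nev prim]
lemmas V_sub_4 = V_sub'[OF N2 Nev prim]
lemmas f12_ne_4 = f12_ne'[OF N2 Nev prim]
lemmas dch3 = dch''[OF N2 Nev prim]
lemmas act_comp_4 = act_comp[OF N2 Nev prim]
lemmas A1_4 = A1[OF N2 Nev prim]
lemmas A2_4 = A2[OF N2 Nev prim]
lemmas A3_4 = A3[OF N2 Nev prim]
lemmas A4_4 = A4[OF N2 Nev prim]
lemmas act_V_4 = act_V[OF N2 Nev prim]

lemma conj_formula:
  assumes "((a,b,c,d),e) \<in> carrier GZ"
  shows "mp_mult (mp_mult tt ((a,b,c,d),e)) ti = ((a + c, b + d - (a + c), c, d - c), e)"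
proof -
  have det: "a * d - b * c = 1" using G_facts_4(5)[OF assms] .
  have c1: "cbar (1,1,0,1) (a,b,c,d) = 1" using cbar_T_left[of "(a,b,c,d)"] det by simp
  have m1: "mp_mult tt ((a,b,c,d),e) = ((a + c, b + d, c, d), e)" unfolding tt_def using c1 by simp
  have d2: "mdet (a + c, b + d, c, d) = 1" using det by (simp add: algebra_simps)
  have c2: "cbar (a + c, b + d, c, d) (1,-1,0,1) = 1" using cbar_Ti_right d2 by blast
  show ?thesis unfolding m1 ti_def using c2 by (simp add: algebra_simps)
qed

lemma lamH:
  assumes "((a,b,c,d),e) \<in> HZ"
  shows "lam_bar \<chi> ((a,b,c,d),e) = of_int (q8 d * kron c d * e) * inverse (eps d) * \<chi> d"
proof -
  have G: "((a,b,c,d),e) \<in> carrier GZ" using HH_sub_4 assms by blast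
  note f = G_facts_4[OF G]
  have "even b" using HH_par_4[OF G] assms by blast
  then have "(a,b,c,d) \<in> Gamma2" using f det_coprime by (simp add: Gamma2_def cong2_odd cong2_even)
  then have "lam (a,b,c,d) = lam_G2 (a,b,c,d)" by (simp add: lam_def)
  also have "\<dots> = of_int (q8 d) * sm (a,b,c,d)" by (rule lam_G2_q8[OF f(2)])
  finally show ?thesis unfolding lam_bar_def by (simp add: algebra_simps)
qed

lemma case2_conj:
  assumes N4: "[N = 0] (mod 4)" and g: "g \<in> HZ"
  shows "pz (mp_mult (mp_mult tt g) ti) = pz g"
proof -
  obtain a b c d e where gg: "g = ((a,b,c,d),e)" by (cases g) auto
  have G: "g \<in> carrier GZ" using HH_sub_4 g by blast
  note f = G_facts_4[OF G[unfolded gg]]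
  have tg: "mp_mult tt g \<in> carrier GZ" using G_mult_4 tt_G_4 G by blast
  have tgn: "mp_mult tt g \<notin> HZ" using HH_prod_4[OF tt_G_4 G] tt_nH_4 g by blast
  have cH: "mp_mult (mp_mult tt g) ti \<in> HZ" using decomp_4(1)[OF tg tgn] .
  have cf: "mp_mult (mp_mult tt g) ti = ((a + c, b + d - (a + c), c, d - c), e)"
    using conj_formula G unfolding gg by blast
  obtain k where k: "N = 4 * k" using N4 by (auto simp: cong_0_iff)
  have "16 dvd N^2" unfolding k by (simp add: power2_eq_square)
  then have c16: "16 dvd c" using f(4) dvd_trans by blast
  have c8: "8 dvd c" using dvd_trans[of "8::int" 16 c] c16 by simp
  have c4: "4 dvd c" using dvd_trans[of "4::int" 16 c] c16 by simp
  have q: "q8 (d - c) = q8 d" using c8 by (intro q8_cong) (simp add: cong_iff_dvd_diff)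
  have kr: "kron c (d - c) = kron c d" using c4 det_coprime[OF f(5)] by (intro KP) (simp_all add: cong_iff_dvd_diff)
  have ep: "eps (d - c) = eps d" using c4 by (intro eps_cong) (simp add: cong_iff_dvd_diff)
  have "N dvd N^2" by (simp add: power2_eq_square)
  then have "N dvd c" using f(4) dvd_trans by blast
  then have ch: "\<chi> (d - c) = \<chi> d" using dchar_cong[OF dch3] by simp
  have "lam_bar \<chi> (mp_mult (mp_mult tt g) ti) = lam_bar \<chi> g"
    using lamH[OF cH[unfolded cf]] lamH[OF g[unfolded gg]] q kr ep ch cf unfolding gg by simp
  then show ?thesis by simp
qed

definition h0 :: "mp" where "h0 = ((1, 0, N^2, 1), 1)"

lemma h0_H: "h0 \<in> HZ"
proof -
  have "h0 \<in> carrier GZ" unfolding h0_def mpg_carrier by (simp add: Gamma0_def)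
  then show ?thesis using HH_par_4 unfolding h0_def by simp
qed

lemma N2pos: "N^2 > 0" using N2 by simp

lemma psi_h0: "pz h0 = 1"
proof -
  have "lam_bar \<chi> h0 = of_int (q8 1 * kron (N^2) 1 * 1) * inverse (eps 1) * \<chi> 1"
    using lamH h0_H unfolding h0_def by blast
  then show ?thesis using dchar_1[OF dch3] by (simp add: q8_def kron_def)
qed

lemma psi_conj_h0:
  assumes N2m: "[N = 2] (mod 4)"
  shows "pz (mp_mult (mp_mult tt h0) ti) = -1"
proof -
  have G: "h0 \<in> carrier GZ" using HH_sub_4 h0_H by blast
  have tg: "mp_mult tt h0 \<in> carrier GZ" using G_mult_4 tt_G_4 G by blast
  have tgn: "mp_mult tt h0 \<notin> HZ" using HH_prod_4[OF tt_G_4 G] tt_nH_4 h0_H by blast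
  have cH: "mp_mult (mp_mult tt h0) ti \<in> HZ" using decomp_4(1)[OF tg tgn] .
  have cf: "mp_mult (mp_mult tt h0) ti = ((1 + N^2, 0 + 1 - (1 + N^2), N^2, 1 - N^2), 1)"
    using conj_formula G unfolding h0_def by blast
  have "4 dvd N - 2" using N2m by (simp add: cong_iff_dvd_diff)
  then obtain k where "N - 2 = 4 * k" by blast
  then have k: "N = 4 * k + 2" by simp
  define t where "t = - (2 * k^2 + 2 * k + 1)"
  have e1: "1 - N^2 = 5 + 8 * t" unfolding k t_def by (simp add: power2_eq_square algebra_simps)
  have "(1 - N^2) mod 8 = 5" unfolding e1 by simp
  then have q: "q8 (1 - N^2) = -1" unfolding q8_def by simp
  have c4: "4 dvd N^2" using N4[OF N2 Nev prim] .
  have cop: "coprime (N^2) 1" by simp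
  have kr: "kron (N^2) (1 - N^2) = kron (N^2) 1" by (intro KP[OF c4 cop]) (simp add: cong_iff_dvd_diff)
  have kr1: "kron (N^2) 1 = 1" by (simp add: kron_def)
  have ep: "eps (1 - N^2) = eps 1" using c4 by (intro eps_cong) (simp add: cong_iff_dvd_diff)
  have ch: "\<chi> (1 - N^2) = \<chi> 1" using dchar_cong[OF dch3] by (simp add: power2_eq_square)
  have "lam_bar \<chi> (mp_mult (mp_mult tt h0) ti) = of_int (q8 (1 - N^2) * kron (N^2) (1 - N^2) * 1) * inverse (eps (1 - N^2)) * \<chi> (1 - N^2)"
    using lamH cH unfolding cf by blast
  also have "\<dots> = -1" unfolding q kr kr1 ep ch using dchar_1[OF dch3] by simp
  finally show ?thesis by simp
qed

end


context
  fixes N :: int and \<chi> :: "int \<Rightarrow> complex"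
  assumes N2: "N \<ge> 2" and Nev: "even N" and prim: "primitive_dirichlet_char N \<chi>"
begin

abbreviation "GW \<equiv> mp_group (Gamma0 (N^2))"
abbreviation "HW \<equiv> carrier (mp_group (Gamma_theta \<inter> Gamma0 (N^2)))"
abbreviation "pw \<equiv> (\<lambda>h. inverse (lam_bar \<chi> h))"
abbreviation "VW \<equiv> ind_space GW HW pw"
abbreviation "wa \<equiv> F1 N \<chi>"
abbreviation "wb \<equiv> F2 N \<chi>"

lemmas HH_sub5 = HH_sub_4[OF N2 Nev prim]
lemmas G_mult5 = G_mult_4[OF N2 Nev prim]
lemmas tt_G5 = tt_G_4[OF N2 Nev prim]
lemmas ti_G5 = ti_G_4[OF N2 Nev prim]
lemmas decomp5 = decomp_4[OF N2 Nev prim]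
lemmas f1_V5 = f1_V_4[OF N2 Nev prim]
lemmas f2_V5 = f2_V_4[OF N2 Nev prim]
lemmas f_vals5 = f_vals_4[OF N2 Nev prim]
lemmas V_span5 = V_span_4[OF N2 Nev prim]
lemmas V_sub5 = V_sub_4[OF N2 Nev prim]
lemmas f12_ne5 = f12_ne_4[OF N2 Nev prim]
lemmas act_comp5 = act_comp_4[OF N2 Nev prim]
lemmas A1_5 = A1_4[OF N2 Nev prim]
lemmas A2_5 = A2_4[OF N2 Nev prim]
lemmas A3_5 = A3_4[OF N2 Nev prim]
lemmas A4_5 = A4_4[OF N2 Nev prim]
lemmas act_V5 = act_V_4[OF N2 Nev prim]
lemmas h0_H5 = h0_H[OF N2 Nev prim]
lemmas psi_h0_5 = psi_h0[OF N2 Nev prim]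
lemmas psi_conj_h0_5 = psi_conj_h0[OF N2 Nev prim]
lemmas case2_conj5 = case2_conj[OF N2 Nev prim]
lemmas rep5 = rep[OF N2 Nev prim]
lemmas V_dim5 = V_dim[OF N2 Nev prim]

lemma VW_sub: "0 \<in> VW" "x \<in> VW \<Longrightarrow> y \<in> VW \<Longrightarrow> x + y \<in> VW" "x \<in> VW \<Longrightarrow> fsc c x \<in> VW"
  using V_sub5 unfolding subspace_fsc by auto

lemma inv_sub_facts:
  assumes "invariant_subspace GW (ind_act GW) VW W"
  shows "W \<subseteq> VW" "0 \<in> W" "x \<in> W \<Longrightarrow> y \<in> W \<Longrightarrow> x + y \<in> W" "x \<in> W \<Longrightarrow> fsc c x \<in> W"
    "g \<in> carrier GW \<Longrightarrow> x \<in> W \<Longrightarrow> ind_act GW g x \<in> W"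
  using assms unfolding invariant_subspace_def subspace_fsc by auto

lemma VW_ne: "VW \<noteq> {0}"
  using f1_V5 f12_ne5(2) by blast

lemma irr1:
  assumes N2m: "[N = 2] (mod 4)"
  shows "irreducible_rep GW (ind_act GW) VW"
  unfolding irreducible_rep_def
proof (intro conjI allI impI)
  show "VW \<noteq> {0}" by (rule VW_ne)
next
  fix W assume inv: "invariant_subspace GW (ind_act GW) VW W"
  note I = inv_sub_facts[OF inv]
  show "W = {0} \<or> W = VW"
  proof (cases "W = {0}")
    case True then show ?thesis by simp
  next
    case False
    then obtain w where w: "w \<in> W" "w \<noteq> 0" using I(2) by blast
    have wV: "w \<in> VW" using I(1) w(1) by blast
    define u where "u = w e0"
    define v where "v = w tt"
    have wd: "w = fsc u wa + fsc v wb" using V_span5[OF wV] unfolding u_def v_def .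
    have h0G: "h0 N \<in> carrier GW" using HH_sub5 h0_H5 by blast
    have r0: "ind_act GW (h0 N) w = fsc u (ind_act GW (h0 N) wa) + fsc v (ind_act GW (h0 N) wb)"
      unfolding wd by (rule act_lin)
    have ra: "ind_act GW (h0 N) wa = wa" using A1_5[OF h0_H5] psi_h0_5 by (simp add: fsc_one)
    have rb: "ind_act GW (h0 N) wb = fsc (-1) wb" using A2_5[OF h0_H5] psi_conj_h0_5[OF N2m] by simp
    have r: "ind_act GW (h0 N) w = fsc u wa + fsc (- v) wb"
      unfolding r0 ra rb fsc_fsc by simp
    have rW: "ind_act GW (h0 N) w \<in> W" using I(5)[OF h0G w(1)] .
    have s1: "w + ind_act GW (h0 N) w = fsc (2 * u) wa" unfolding r using wd by (simp add: fsc_def fun_eq_iff)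
    have s2: "w + fsc (-1) (ind_act GW (h0 N) w) = fsc (2 * v) wb" unfolding r using wd by (simp add: fsc_def fun_eq_iff)
    have s1W: "fsc (2 * u) wa \<in> W" using I(3)[OF w(1) rW] unfolding s1 .
    have s2W: "fsc (2 * v) wb \<in> W" using I(3)[OF w(1) I(4)[OF rW, of "-1"]] unfolding s2 .
    have both: "wa \<in> W \<and> wb \<in> W"
    proof (cases "u = 0")
      case False
      have "fsc (1 / (2 * u)) (fsc (2 * u) wa) = wa" using False by (simp add: fsc_fsc fsc_one)
      then have aW: "wa \<in> W" using I(4)[OF s1W] by metis
      have "wb \<in> W" using I(5)[OF tt_G5 aW] A3_5 by simp
      then show ?thesis using aW by simp
    next
      case True
      then have "v \<noteq> 0" using w(2) wd by (auto simp: fsc_def fun_eq_iff)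
      have "fsc (1 / (2 * v)) (fsc (2 * v) wb) = wb" using \<open>v \<noteq> 0\<close> by (simp add: fsc_fsc fsc_one)
      then have bW: "wb \<in> W" using I(4)[OF s2W] by metis
      have "wa \<in> W" using I(5)[OF tt_G5 bW] A4_5 by simp
      then show ?thesis using bW by simp
    qed
    have "VW \<subseteq> W"
    proof
      fix f assume "f \<in> VW"
      then have "f = fsc (f e0) wa + fsc (f tt) wb" by (rule V_span5)
      then show "f \<in> W" using I(3) I(4) both by metis
    qed
    then show ?thesis using I(1) by blast
  qed
qed

lemma A2c:
  assumes N0: "[N = 0] (mod 4)" and g: "g \<in> HW"
  shows "ind_act GW g wb = fsc (pw g) wb"
  using A2_5[OF g] case2_conj5[OF N0 g] by simp

lemma eig_p:
  assumes N0: "[N = 0] (mod 4)" and g: "g \<in> carrier GW"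
  shows "\<exists>c. ind_act GW g (wa + wb) = fsc c (wa + wb)"
proof (cases "g \<in> HW")
  case True
  have "ind_act GW g (wa + wb) = ind_act GW g wa + ind_act GW g wb" by (rule act_add)
  also have "\<dots> = fsc (pw g) wa + fsc (pw g) wb" unfolding A1_5[OF True] A2c[OF N0 True] ..
  also have "\<dots> = fsc (pw g) (wa + wb)" by (simp add: fsc_add)
  finally show ?thesis by blast
next
  case False
  define h where "h = mp_mult g ti"
  have hH: "h \<in> HW" unfolding h_def using decomp5(1)[OF g False] .
  have hG: "h \<in> carrier GW" using HH_sub5 hH by blast
  have gh: "g = mp_mult h tt" unfolding h_def using decomp5(2)[OF g False] by simp
  have t: "ind_act GW tt (wa + wb) = wa + wb" unfolding act_add A3_5 A4_5 by (rule add.commute)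
  have "ind_act GW g (wa + wb) = ind_act GW h (ind_act GW tt (wa + wb))"
    unfolding gh using act_comp5[OF hG tt_G5] .
  also have "\<dots> = ind_act GW h wa + ind_act GW h wb" unfolding t by (rule act_add)
  also have "\<dots> = fsc (pw h) wa + fsc (pw h) wb" unfolding A1_5[OF hH] A2c[OF N0 hH] ..
  also have "\<dots> = fsc (pw h) (wa + wb)" by (simp add: fsc_add)
  finally show ?thesis by blast
qed

lemma eig_m:
  assumes N0: "[N = 0] (mod 4)" and g: "g \<in> carrier GW"
  shows "\<exists>c. ind_act GW g (wa + fsc (-1) wb) = fsc c (wa + fsc (-1) wb)"
proof (cases "g \<in> HW")
  case True
  have "ind_act GW g (wa + fsc (-1) wb) = ind_act GW g wa + fsc (-1) (ind_act GW g wb)"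
    unfolding act_add act_fsc ..
  also have "\<dots> = fsc (pw g) wa + fsc (-1) (fsc (pw g) wb)" unfolding A1_5[OF True] A2c[OF N0 True] ..
  also have "\<dots> = fsc (pw g) (wa + fsc (-1) wb)" by (simp add: fsc_add fsc_fsc mult.commute)
  finally have "ind_act GW g (wa + fsc (-1) wb) = fsc (pw g) (wa + fsc (-1) wb)" .
  then show ?thesis by blast
next
  case False
  define h where "h = mp_mult g ti"
  have hH: "h \<in> HW" unfolding h_def using decomp5(1)[OF g False] .
  have hG: "h \<in> carrier GW" using HH_sub5 hH by blast
  have gh: "g = mp_mult h tt" unfolding h_def using decomp5(2)[OF g False] by simp
  have t: "ind_act GW tt (wa + fsc (-1) wb) = fsc (-1) (wa + fsc (-1) wb)"
    unfolding act_add act_fsc A3_5 A4_5 by (simp add: fsc_def fun_eq_iff)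
  have "ind_act GW g (wa + fsc (-1) wb) = ind_act GW h (ind_act GW tt (wa + fsc (-1) wb))"
    unfolding gh using act_comp5[OF hG tt_G5] .
  also have "\<dots> = ind_act GW h (fsc (-1) (wa + fsc (-1) wb))" by (simp only: t)
  also have "\<dots> = fsc (-1) (ind_act GW h wa + fsc (-1) (ind_act GW h wb))"
    by (simp only: act_add act_fsc)
  also have "\<dots> = fsc (-1) (fsc (pw h) wa + fsc (-1) (fsc (pw h) wb))" unfolding A1_5[OF hH] A2c[OF N0 hH] ..
  also have "\<dots> = fsc (- pw h) (wa + fsc (-1) wb)" by (simp add: fsc_def fun_eq_iff algebra_simps)
  finally show ?thesis by blast
qed

lemma line_inv:
  assumes pV: "p \<in> VW" and eig: "\<forall>g\<in>carrier GW. \<exists>c. ind_act GW g p = fsc c p"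
  shows "invariant_subspace GW (ind_act GW) VW {fsc u p | u. True}"
  unfolding invariant_subspace_def
proof (intro conjI ballI)
  show "{fsc u p | u. True} \<subseteq> VW" using VW_sub(3) pV by blast
  show "Modules.module.subspace fsc {fsc u p | u. True}" by (rule line_sub)
next
  fix g w assume g: "g \<in> carrier GW" and w: "w \<in> {fsc u p | u. True}"
  then obtain u where u: "w = fsc u p" by blast
  obtain c where c: "ind_act GW g p = fsc c p" using eig g by blast
  have "ind_act GW g w = fsc (u * c) p" unfolding u act_fsc c fsc_fsc ..
  then show "ind_act GW g w \<in> {fsc u p | u. True}" by blast
qed

lemma line_irr:
  assumes "p \<noteq> 0"
  shows "irreducible_rep GW (ind_act GW) {fsc u p | u. True}"
  unfolding irreducible_rep_def
proof (intro conjI allI impI)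
  have "p \<in> {fsc u p | u. True}" by (rule CollectI, rule exI[of _ 1]) (simp add: fsc_one)
  then show "{fsc u p | u. True} \<noteq> {0}" using assms by blast
next
  fix W assume "invariant_subspace GW (ind_act GW) {fsc u p | u. True} W"
  then have "Modules.module.subspace fsc W" "W \<subseteq> {fsc u p | u. True}" unfolding invariant_subspace_def by auto
  then show "W = {0} \<or> W = {fsc u p | u. True}" using line_irred assms by blast
qed

lemma pm_vals: "(wa + wb) e0 = 1" "(wa + wb) tt = 1" "(wa + fsc (-1) wb) e0 = 1" "(wa + fsc (-1) wb) tt = -1"
  using f_vals5 by (simp_all add: fsc_def)

lemma case2:
  assumes N0: "[N = 0] (mod 4)"
  shows "\<not> irreducible_rep GW (ind_act GW) VW \<and>
           (\<exists>W1 W2. invariant_subspace GW (ind_act GW) VW W1 \<and> invariant_subspace GW (ind_act GW) VW W2 \<and>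
              irreducible_rep GW (ind_act GW) W1 \<and> irreducible_rep GW (ind_act GW) W2 \<and>
              W1 \<inter> W2 = {0} \<and> {w1 + w2 | w1 w2. w1 \<in> W1 \<and> w2 \<in> W2} = VW \<and>
              \<not> rep_iso GW (ind_act GW) W1 W2)"
proof -
  define p where "p = wa + wb"
  define m where "m = wa + fsc (-1) wb"
  define W1 where "W1 = {fsc u p | u. True}"
  define W2 where "W2 = {fsc u m | u. True}"
  have pV: "p \<in> VW" unfolding p_def using VW_sub f1_V5 f2_V5 by blast
  have mV: "m \<in> VW" unfolding m_def using VW_sub f1_V5 f2_V5 by blast
  have pv: "p e0 = 1" "p tt = 1" "m e0 = 1" "m tt = -1" using pm_vals unfolding p_def m_def by auto
  have p0: "p \<noteq> 0" using pv(1) by auto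
  have m0: "m \<noteq> 0" using pv(3) by auto
  have inv1: "invariant_subspace GW (ind_act GW) VW W1"
    unfolding W1_def using line_inv[OF pV] eig_p[OF N0] unfolding p_def by blast
  have inv2: "invariant_subspace GW (ind_act GW) VW W2"
    unfolding W2_def using line_inv[OF mV] eig_m[OF N0] unfolding m_def by blast
  have irr1: "irreducible_rep GW (ind_act GW) W1" unfolding W1_def using line_irr[OF p0] .
  have irr2: "irreducible_rep GW (ind_act GW) W2" unfolding W2_def using line_irr[OF m0] .
  have int: "W1 \<inter> W2 = {0}"
  proof
    show "W1 \<inter> W2 \<subseteq> {0}"
    proof
      fix x assume "x \<in> W1 \<inter> W2"
      then obtain u v where u: "x = fsc u p" and v: "x = fsc v m" unfolding W1_def W2_def by blast
      have "u = v" using arg_cong[OF u[symmetric, unfolded v], of "\<lambda>f. f e0"] pv by (simp add: fsc_def)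
      moreover have "u = - v" using arg_cong[OF u[symmetric, unfolded v], of "\<lambda>f. f tt"] pv by (simp add: fsc_def)
      ultimately have "u = 0" by simp
      then show "x \<in> {0}" using u fsc_zero by simp
    qed
    have "0 \<in> W1" unfolding W1_def by (rule CollectI, rule exI[of _ 0]) (simp add: fsc_zero)
    moreover have "0 \<in> W2" unfolding W2_def by (rule CollectI, rule exI[of _ 0]) (simp add: fsc_zero)
    ultimately show "{0} \<subseteq> W1 \<inter> W2" by blast
  qed
  have sum: "{w1 + w2 | w1 w2. w1 \<in> W1 \<and> w2 \<in> W2} = VW"
  proof
    show "{w1 + w2 | w1 w2. w1 \<in> W1 \<and> w2 \<in> W2} \<subseteq> VW"
      using inv1 inv2 VW_sub(2) unfolding invariant_subspace_def by blast
    show "VW \<subseteq> {w1 + w2 | w1 w2. w1 \<in> W1 \<and> w2 \<in> W2}"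
    proof
      fix f assume "f \<in> VW"
      then have fd: "f = fsc (f e0) wa + fsc (f tt) wb" by (rule V_span5)
      have "f = fsc ((f e0 + f tt) / 2) p + fsc ((f e0 - f tt) / 2) m"
        unfolding p_def m_def by (subst fd) (simp add: fsc_def fun_eq_iff field_simps)
      moreover have "fsc ((f e0 + f tt) / 2) p \<in> W1" "fsc ((f e0 - f tt) / 2) m \<in> W2"
        unfolding W1_def W2_def by blast+
      ultimately show "f \<in> {w1 + w2 | w1 w2. w1 \<in> W1 \<and> w2 \<in> W2}" by blast
    qed
  qed
  have nirr: "\<not> irreducible_rep GW (ind_act GW) VW"
  proof
    assume "irreducible_rep GW (ind_act GW) VW"
    then have "W1 = {0} \<or> W1 = VW" using inv1 unfolding irreducible_rep_def by blast
    moreover have "W1 \<noteq> {0}" using irr1 unfolding irreducible_rep_def by blast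
    moreover have "wa \<notin> W1"
    proof
      assume "wa \<in> W1"
      then obtain u where u: "wa = fsc u p" unfolding W1_def by blast
      have "1 = u" using arg_cong[OF u, of "\<lambda>f. f e0"] pv f_vals5 by (simp add: fsc_def)
      moreover have "0 = u" using arg_cong[OF u, of "\<lambda>f. f tt"] pv f_vals5 by (simp add: fsc_def)
      ultimately show False by simp
    qed
    ultimately show False using f1_V5 by blast
  qed
  have niso: "\<not> rep_iso GW (ind_act GW) W1 W2"
  proof
    assume "rep_iso GW (ind_act GW) W1 W2"
    then obtain T where T: "bij_betw T W1 W2" "\<forall>c. \<forall>v\<in>W1. T (fsc c v) = fsc c (T v)"
      "\<forall>g\<in>carrier GW. \<forall>v\<in>W1. T (ind_act GW g v) = ind_act GW g (T v)"
      unfolding rep_iso_def by blast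
    have pW: "p \<in> W1" unfolding W1_def by (rule CollectI, rule exI[of _ 1]) (simp add: fsc_one)
    have "T p \<in> W2" using T(1) pW bij_betwE by blast
    then obtain v where v: "T p = fsc v m" unfolding W2_def by blast
    have tp: "ind_act GW tt p = p" unfolding p_def act_add A3_5 A4_5 by (rule add.commute)
    have tm: "ind_act GW tt m = fsc (-1) m" unfolding m_def act_add act_fsc A3_5 A4_5 by (simp add: fsc_def fun_eq_iff)
    have "T (ind_act GW tt p) = ind_act GW tt (T p)" using T(3) tt_G5 pW by blast
    then have "T p = ind_act GW tt (T p)" using tp by simp
    then have "fsc v m = ind_act GW tt (fsc v m)" using v by simp
    also have "\<dots> = fsc (- v) m" unfolding act_fsc tm fsc_fsc by simp
    finally have "fsc v m = fsc (- v) m" .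
    then have "fsc v m e0 = fsc (- v) m e0" by simp
    then have "v = - v" using pv(3) by (simp add: fsc_def)
    then have "v = 0" by simp
    then have Tp0: "T p = 0" using v fsc_zero by simp
    have zW: "fsc 0 p \<in> W1" unfolding W1_def by blast
    have "T (fsc 0 p) = fsc 0 (T p)" using T(2) pW by blast
    then have Tz: "T (fsc 0 p) = T p" using Tp0 fsc_zero by simp
    have inj: "inj_on T W1" using T(1) unfolding bij_betw_def by blast
    have e: "fsc 0 p = p" using inj_onD[OF inj Tz zW pW] .
    have "fsc 0 p = 0" by (rule fsc_zero)
    then have "p = 0" using e by simp
    then show False using p0 by simp
  qed
  show ?thesis using nirr inv1 inv2 irr1 irr2 int sum niso by blast
qed

lemma main_both: "complex_rep GW (ind_act GW) VW \<and> rep_dim VW = 2"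
  using rep5 V_dim5 by blast

end


theorem mainTheorem11:
  fixes N :: int and \<chi> :: "int \<Rightarrow> complex"
  assumes "N \<ge> 2" and "even N" and "primitive_dirichlet_char N \<chi>"
  defines "G \<equiv> mp_group (Gamma0 (N^2))"
      and "H \<equiv> carrier (mp_group (Gamma_theta \<inter> Gamma0 (N^2)))"
  defines "V \<equiv> ind_space G H (\<lambda>h. inverse (lam_bar \<chi> h))"
  shows "([N = 2] (mod 4) \<longrightarrow>
           complex_rep G (ind_act G) V \<and> rep_dim V = 2 \<and> irreducible_rep G (ind_act G) V) \<and>
         ([N = 0] (mod 4) \<longrightarrow>
           complex_rep G (ind_act G) V \<and> rep_dim V = 2 \<and> \<not> irreducible_rep G (ind_act G) V \<and>
           (\<exists>W1 W2. invariant_subspace G (ind_act G) V W1 \<and> invariant_subspace G (ind_act G) V W2 \<and>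
              irreducible_rep G (ind_act G) W1 \<and> irreducible_rep G (ind_act G) W2 \<and>
              W1 \<inter> W2 = {0} \<and> {w1 + w2 | w1 w2. w1 \<in> W1 \<and> w2 \<in> W2} = V \<and>
              \<not> rep_iso G (ind_act G) W1 W2))"

proof -
  have c1: "[N = 2] (mod 4) \<longrightarrow>
           complex_rep G (ind_act G) V \<and> rep_dim V = 2 \<and> irreducible_rep G (ind_act G) V"
    unfolding G_def H_def V_def using main_both[OF assms(1-3)] irr1[OF assms(1-3)] by blast
  have c2: "[N = 0] (mod 4) \<longrightarrow>
           complex_rep G (ind_act G) V \<and> rep_dim V = 2 \<and> \<not> irreducible_rep G (ind_act G) V \<and>
           (\<exists>W1 W2. invariant_subspace G (ind_act G) V W1 \<and> invariant_subspace G (ind_act G) V W2 \<and>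
              irreducible_rep G (ind_act G) W1 \<and> irreducible_rep G (ind_act G) W2 \<and>
              W1 \<inter> W2 = {0} \<and> {w1 + w2 | w1 w2. w1 \<in> W1 \<and> w2 \<in> W2} = V \<and>
              \<not> rep_iso G (ind_act G) W1 W2)"
    unfolding G_def H_def V_def using main_both[OF assms(1-3)] case2[OF assms(1-3)] by blast
  show ?thesis using c1 c2 by blast
qed

end
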